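(* Let $c\in\mathbb{N}$ and let $\beta$ be a parameter. Consider the recurrence $$x_{n+4}x_n=x_{n+3}x_{n+1}+\beta\,x_{n+2}^c,$$ corresponding to iteration of the rational map $\varphi:(x_0,x_1,x_2,x_3)\mapsto\big(x_1,x_2,x_3,(x_1x_3+\beta x_2^c)/x_0\big)$ (and its inverse for negative $n$). Then: (i) (Laurent property) $x_n\in\mathbb{Z}[x_0^{\pm1},x_1^{\pm1},x_2^{\pm1},x_3^{\pm1},\beta]$ for all $n\in\mathbb{Z}$; (ii) the recurrence satisfies the singularity confinement test: if for some $n$ one has $x_{n+4}=\epsilon\to 0$ (so that $x_{n+8}$ is potentially singular), then $x_{n+8}=O(1)$ as $\epsilon\to0$; (iii) $\varphi$ is a Poisson map with respect to the log-canonical Poisson bracket $\{\cdot,\cdot\}_c$ defined by $\{x_0,x_1\}_c=x_0x_1$, $\{x_0,x_2\}_c=c\,x_0x_2$, $\{x_0,x_3\}_c=(c+1)x_0x_3$, $\{x_1,x_2\}_c=x_1x_2$, $\{x_1,x_3\}_c=c\,x_1x_3$, $\{x_2,x_3\}_c=x_2x_3$, and this bracket is nondegenerate for $c\neq 2$.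
   Context: Here $\mathbb{N}$ includes $0$ (the paper treats the cases $c=0,1,2,\ldots$). The bracket is extended to rational functions of $x_0,x_1,x_2,x_3$ by bilinearity and the Leibniz rule. A map is Poisson if it preserves the bracket. *)

theory Defs
  imports "HOL-Analysis.Analysis"
begin

definition phi :: "nat \<Rightarrow> complex \<Rightarrow> complex^4 \<Rightarrow> complex^4" where
  "phi c \<beta> x = (\<chi> i. if i = 0 then x$1 else if i = 1 then x$2 else if i = 2 then x$3
                   else (x$1 * x$3 + \<beta> * (x$2)^c) / x$0)"

definition phiinv :: "nat \<Rightarrow> complex \<Rightarrow> complex^4 \<Rightarrow> complex^4" where
  "phiinv c \<beta> x = (\<chi> i. if i = 0 then (x$0 * x$2 + \<beta> * (x$1)^c) / x$3
                   else if i = 1 then x$0 else if i = 2 then x$1 else x$2)"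

definition xseq :: "nat \<Rightarrow> complex \<Rightarrow> complex^4 \<Rightarrow> int \<Rightarrow> complex" where
  "xseq c \<beta> u n = (if 0 \<le> n then ((phi c \<beta> ^^ nat n) u) $ 0
                    else ((phiinv c \<beta> ^^ nat (- n)) u) $ 0)"

text \<open>The ring Z[x0^{\<plusminus>1},x1^{\<plusminus>1},x2^{\<plusminus>1},x3^{\<plusminus>1},beta], realised as functions of (x, beta):
  the smallest set of functions containing the integer constants, the coordinates x_i,
  their inverses 1/x_i and beta, closed under addition and multiplication.\<close>
inductive_set laurent :: "(complex^4 \<Rightarrow> complex \<Rightarrow> complex) set" where
  const: "(\<lambda>x b. of_int k) \<in> laurent"
| var: "(\<lambda>x b. x $ i) \<in> laurent"
| inv: "(\<lambda>x b. inverse (x $ i)) \<in> laurent"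
| par: "(\<lambda>x b. b) \<in> laurent"
| add: "f \<in> laurent \<Longrightarrow> g \<in> laurent \<Longrightarrow> (\<lambda>x b. f x b + g x b) \<in> laurent"
| mult: "f \<in> laurent \<Longrightarrow> g \<in> laurent \<Longrightarrow> (\<lambda>x b. f x b * g x b) \<in> laurent"

definition pderiv4 :: "4 \<Rightarrow> (complex^4 \<Rightarrow> complex) \<Rightarrow> complex^4 \<Rightarrow> complex" where
  "pderiv4 k f x = deriv (\<lambda>t. f (\<chi> m. if m = k then t else x $ m)) (x $ k)"

text \<open>Coefficient matrix C_c of the log-canonical bracket: {x_i,x_j}_c = C_ij x_i x_j.\<close>
definition lc_coeff :: "nat \<Rightarrow> complex^4^4" where
  "lc_coeff c = (\<chi> i j.
     if i = 0 \<and> j = 1 then 1 else if i = 0 \<and> j = 2 then of_nat c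
     else if i = 0 \<and> j = 3 then of_nat c + 1
     else if i = 1 \<and> j = 2 then 1 else if i = 1 \<and> j = 3 then of_nat c
     else if i = 2 \<and> j = 3 then 1
     else if i = 1 \<and> j = 0 then -1 else if i = 2 \<and> j = 0 then - of_nat c
     else if i = 3 \<and> j = 0 then - (of_nat c + 1)
     else if i = 2 \<and> j = 1 then -1 else if i = 3 \<and> j = 1 then - of_nat c
     else if i = 3 \<and> j = 2 then -1
     else 0)"

definition lc_bracket :: "nat \<Rightarrow> complex^4 \<Rightarrow> complex^4^4" where
  "lc_bracket c x = (\<chi> i j. lc_coeff c $ i $ j * x $ i * x $ j)"

text \<open>Bracket of two (rational) functions, extended by bilinearity and the Leibniz rule.\<close>
definition pbr :: "nat \<Rightarrow> (complex^4 \<Rightarrow> complex) \<Rightarrow> (complex^4 \<Rightarrow> complex) \<Rightarrow> complex^4 \<Rightarrow> complex" where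
  "pbr c f g x = (\<Sum>k\<in>UNIV. \<Sum>l\<in>UNIV. pderiv4 k f x * lc_bracket c x $ k $ l * pderiv4 l g x)"

end

theory Submission
  imports Defs "HOL-Computational_Algebra.Polynomial_Factorial"
begin

lemma four_eq0: "(4::4) = 0" by simp
lemma UNIV4: "(UNIV::4 set) = {0,1,2,3}"
  using UNIV_4 four_eq0 by auto
lemma sum4: "sum f (UNIV::4 set) = f 0 + f 1 + f 2 + f 3"
  unfolding UNIV4 by (simp add: ac_simps)
lemma all4: "(\<forall>i::4. P i) \<longleftrightarrow> P 0 \<and> P 1 \<and> P 2 \<and> P 3"
  by (metis UNIV4 UNIV_I empty_iff insert_iff)
lemma distinct4: "(0::4) \<noteq> 1" "(0::4) \<noteq> 2" "(0::4) \<noteq> 3" "(1::4) \<noteq> 2" "(1::4) \<noteq> 3" "(2::4) \<noteq> 3"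
  by simp_all

definition Minv :: "nat \<Rightarrow> complex^4^4" where
 "Minv c = (\<chi> i j. if i = 0 \<and> j = 1 then -1 else if i = 0 \<and> j = 2 then of_nat c
     else if i = 0 \<and> j = 3 then -1
     else if i = 1 \<and> j = 0 then 1 else if i = 1 \<and> j = 2 then - (of_nat c + 1)
     else if i = 1 \<and> j = 3 then of_nat c
     else if i = 2 \<and> j = 0 then - of_nat c else if i = 2 \<and> j = 1 then of_nat c + 1
     else if i = 2 \<and> j = 3 then -1
     else if i = 3 \<and> j = 0 then 1 else if i = 3 \<and> j = 1 then - of_nat c
     else if i = 3 \<and> j = 2 then 1 else 0)"

lemma pf_nz: "c \<noteq> 2 \<Longrightarrow> (2 + of_nat c - (of_nat c)^2 :: complex) \<noteq> 0"
proof
  assume c: "c \<noteq> 2" and h: "(2 + of_nat c - (of_nat c)^2 :: complex) = 0"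
  have "(2 + of_nat c - (of_nat c)^2 :: complex) = of_int (2 + int c - (int c)^2)" by simp
  with h have "2 + int c - (int c)^2 = 0" by (metis of_int_eq_0_iff)
  hence "(int c - 2) * (int c + 1) = 0" by (simp add: algebra_simps power2_eq_square)
  thus False using c by auto
qed

lemma det_nz:
  assumes c: "c \<noteq> 2" and x: "\<forall>i. x $ i \<noteq> 0"
  shows "det (lc_bracket c x) \<noteq> 0"
proof -
  define P where "P = (2 + of_nat c - (of_nat c)^2 :: complex)"
  have P: "P \<noteq> 0" using pf_nz[OF c] by (simp add: P_def)
  define B where "B = (\<chi> i j. Minv c $ i $ j / (P * x$i * x$j))"
  have x0: "x$0 \<noteq> 0" and x1: "x$1 \<noteq> 0" and x2: "x$2 \<noteq> 0" and x3: "x$3 \<noteq> 0" using x by auto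
  have "lc_bracket c x ** B = mat 1"
    unfolding vec_eq_iff all4 matrix_matrix_mult_def
    by (simp add: sum4 lc_bracket_def lc_coeff_def B_def Minv_def mat_def x0 x1 x2 x3 P field_simps,
        simp_all add: P_def algebra_simps power2_eq_square)
  hence "det (lc_bracket c x) * det B = 1" by (metis det_I det_mul)
  thus ?thesis by auto
qed

lemma phi_comp: "phi c \<beta> y $ 0 = y$1" "phi c \<beta> y $ 1 = y$2" "phi c \<beta> y $ 2 = y$3"
  "phi c \<beta> y $ 3 = (y$1 * y$3 + \<beta> * (y$2)^c) / y$0"
  by (simp_all add: phi_def)

lemma upd_comp: "(\<chi> m. if m = k then t else x$m) $ j = (if j = k then t else x$j)"
  by simp

lemma pd_coord: "pderiv4 k (\<lambda>y. y$j) x = (if j = k then 1 else 0)"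
  unfolding pderiv4_def upd_comp by (cases "j = k") simp_all

lemma pd_x4:
  assumes x0: "x$0 \<noteq> 0"
  shows "pderiv4 k (\<lambda>y. (y$1 * y$3 + \<beta> * (y$2)^c) / y$0) x =
    (if k = 0 then - (x$1 * x$3 + \<beta> * (x$2)^c) / (x$0)^2 else if k = 1 then x$3 / x$0
     else if k = 2 then \<beta> * of_nat c * (x$2)^(c-1) / x$0 else x$1 / x$0)"
proof -
  have k: "k = 0 \<or> k = 1 \<or> k = 2 \<or> k = 3" using all4[of "\<lambda>i. i = 0 \<or> i = 1 \<or> i = 2 \<or> i = 3"] by blast
  show ?thesis
  proof (rule disjE[OF k], goal_cases)
    case 1
    have "((\<lambda>t. (x$1 * x$3 + \<beta> * (x$2)^c) / t) has_field_derivative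
          - (x$1 * x$3 + \<beta> * (x$2)^c) / (x$0)^2) (at (x$0))"
      by (rule derivative_eq_intros refl | use x0 in \<open>simp add: power2_eq_square\<close>)+
    hence "deriv (\<lambda>t. (x$1 * x$3 + \<beta> * (x$2)^c) / t) (x$0) = - (x$1 * x$3 + \<beta> * (x$2)^c) / (x$0)^2"
      by (rule DERIV_imp_deriv)
    thus ?case using 1 unfolding pderiv4_def upd_comp by simp
  next
    case 2
    then consider "k = 1" | "k = 2" | "k = 3" by blast
    then show ?case
    proof cases
      case 1
      have "((\<lambda>t. (t * x$3 + \<beta> * (x$2)^c) / x$0) has_field_derivative x$3 / x$0) (at (x$1))"
        by (rule derivative_eq_intros refl | simp add: x0)+
      thus ?thesis using 1 unfolding pderiv4_def upd_comp by (simp add: DERIV_imp_deriv)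
    next
      case 2
      have "((\<lambda>t. (x$1 * x$3 + \<beta> * t^c) / x$0) has_field_derivative \<beta> * of_nat c * (x$2)^(c-1) / x$0) (at (x$2))"
        by (rule derivative_eq_intros refl | simp add: x0)+
      thus ?thesis using 2 unfolding pderiv4_def upd_comp by (simp add: DERIV_imp_deriv)
    next
      case 3
      have "((\<lambda>t. (x$1 * t + \<beta> * (x$2)^c) / x$0) has_field_derivative x$1 / x$0) (at (x$3))"
        by (rule derivative_eq_intros refl | simp add: x0)+
      thus ?thesis using 3 unfolding pderiv4_def upd_comp by (simp add: DERIV_imp_deriv)
    qed
  qed
qed

lemma cpow: "of_nat c * (z::complex)^(c-1) * z = of_nat c * z^c"
  by (cases c) simp_all

lemma lcc: "lc_coeff c $ 0 $ 0 = 0" "lc_coeff c $ 0 $ 1 = 1" "lc_coeff c $ 0 $ 2 = of_nat c" "lc_coeff c $ 0 $ 3 = of_nat c + 1"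
  "lc_coeff c $ 1 $ 0 = -1" "lc_coeff c $ 1 $ 1 = 0" "lc_coeff c $ 1 $ 2 = 1" "lc_coeff c $ 1 $ 3 = of_nat c"
  "lc_coeff c $ 2 $ 0 = - of_nat c" "lc_coeff c $ 2 $ 1 = -1" "lc_coeff c $ 2 $ 2 = 0" "lc_coeff c $ 2 $ 3 = 1"
  "lc_coeff c $ 3 $ 0 = - (of_nat c + 1)" "lc_coeff c $ 3 $ 1 = - of_nat c" "lc_coeff c $ 3 $ 2 = -1" "lc_coeff c $ 3 $ 3 = 0"
  by (simp_all add: lc_coeff_def)

lemma lcb: "lc_bracket c x $ k $ l = lc_coeff c $ k $ l * x$k * x$l"
  by (simp add: lc_bracket_def)

lemma pbr_left: "pbr c (\<lambda>y. y$a) g x = (\<Sum>l\<in>UNIV. lc_bracket c x $ a $ l * pderiv4 l g x)"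
proof -
  have h: "\<And>k. (\<Sum>l\<in>UNIV. (if a = k then 1 else 0) * lc_bracket c x $ k $ l * pderiv4 l g x)
      = (if k = a then (\<Sum>l\<in>UNIV. lc_bracket c x $ k $ l * pderiv4 l g x) else 0)"
    by (case_tac "k = a") simp_all
  show ?thesis unfolding pbr_def pd_coord h by simp
qed

lemma lcb_anti: "lc_bracket c x $ k $ l = - lc_bracket c x $ l $ k"
proof -
  have k: "k = 0 \<or> k = 1 \<or> k = 2 \<or> k = 3" using all4[of "\<lambda>i. i = 0 \<or> i = 1 \<or> i = 2 \<or> i = 3"] by blast
  have l: "l = 0 \<or> l = 1 \<or> l = 2 \<or> l = 3" using all4[of "\<lambda>i. i = 0 \<or> i = 1 \<or> i = 2 \<or> i = 3"] by blast
  have "lc_coeff c $ k $ l = - lc_coeff c $ l $ k"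
    using k l by (elim disjE) (simp_all add: lcc)
  thus ?thesis unfolding lcb by (simp add: algebra_simps)
qed

lemma pbr_anti: "pbr c f g x = - pbr c g f x"
proof -
  have "pbr c f g x = (\<Sum>k\<in>UNIV. \<Sum>l\<in>UNIV. - (pderiv4 l g x * lc_bracket c x $ l $ k * pderiv4 k f x))"
    unfolding pbr_def
  proof (intro sum.cong refl)
    fix k l
    show "pderiv4 k f x * lc_bracket c x $ k $ l * pderiv4 l g x =
          - (pderiv4 l g x * lc_bracket c x $ l $ k * pderiv4 k f x)"
      by (simp only: lcb_anti[of c x k l] mult_minus_left mult_minus_right mult.commute mult.left_commute)
  qed
  also have "\<dots> = - (\<Sum>k\<in>UNIV. \<Sum>l\<in>UNIV. pderiv4 l g x * lc_bracket c x $ l $ k * pderiv4 k f x)"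
    by (simp only: sum_negf)
  also have "(\<Sum>k\<in>UNIV. \<Sum>l\<in>UNIV. pderiv4 l g x * lc_bracket c x $ l $ k * pderiv4 k f x) = pbr c g f x"
    unfolding pbr_def by (rule sum.swap)
  finally show ?thesis .
qed

lemma pbr_self: "pbr c f f x = 0"
proof -
  have h: "pbr c f f x = - pbr c f f x" by (rule pbr_anti)
  have "2 * pbr c f f x = 0"
    by (subst mult_2, subst (2) h, rule add.right_inverse)
  thus ?thesis by simp
qed

lemma x4_pd_gen:
  fixes c :: nat and \<beta> :: complex
  assumes x0: "x$0 \<noteq> 0"
  shows "pbr c (\<lambda>y. y$a) (\<lambda>y. (y$1 * y$3 + \<beta> * (y$2)^c) / y$0) x =
     lc_coeff c $ a $ 0 * x$a * (- (x$1 * x$3 + \<beta> * (x$2)^c) / x$0)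
   + lc_coeff c $ a $ 1 * x$a * (x$1 * x$3 / x$0)
   + lc_coeff c $ a $ 2 * x$a * (\<beta> * of_nat c * (x$2)^c / x$0)
   + lc_coeff c $ a $ 3 * x$a * (x$1 * x$3 / x$0)"
proof -
  let ?f = "(\<lambda>y. (y$1 * y$3 + \<beta> * (y$2)^c) / y$0)"
  have p0: "x$0 * pderiv4 0 ?f x = - (x$1 * x$3 + \<beta> * (x$2)^c) / x$0"
    using pd_x4[OF x0, where k=0 and \<beta>=\<beta> and c=c] x0 by (simp add: power2_eq_square)
  have p1: "x$1 * pderiv4 1 ?f x = x$1 * x$3 / x$0"
    using pd_x4[OF x0, where k=1 and \<beta>=\<beta> and c=c] by simp
  have p2: "x$2 * pderiv4 2 ?f x = \<beta> * of_nat c * (x$2)^c / x$0"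
    using pd_x4[OF x0, where k=2 and \<beta>=\<beta> and c=c] cpow[of c "x$2"]
    by (simp add: mult.commute mult.left_commute)
  have p3: "x$3 * pderiv4 3 ?f x = x$1 * x$3 / x$0"
    using pd_x4[OF x0, where k=3 and \<beta>=\<beta> and c=c] by simp
  have "pbr c (\<lambda>y. y$a) ?f x =
     lc_coeff c $ a $ 0 * x$a * (x$0 * pderiv4 0 ?f x) + lc_coeff c $ a $ 1 * x$a * (x$1 * pderiv4 1 ?f x)
   + lc_coeff c $ a $ 2 * x$a * (x$2 * pderiv4 2 ?f x) + lc_coeff c $ a $ 3 * x$a * (x$3 * pderiv4 3 ?f x)"
    unfolding pbr_left sum4 lcb by (simp only: mult.assoc)
  thus ?thesis unfolding p0 p1 p2 p3 .
qed

lemma x4_pd: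
  fixes c :: nat and \<beta> :: complex
  assumes x0: "x$0 \<noteq> 0"
  defines "f4 \<equiv> (\<lambda>y. (y$1 * y$3 + \<beta> * (y$2)^c) / y$0)"
  shows "pbr c (\<lambda>y. y$1) f4 x = (of_nat c + 1) * x$1 * ((x$1 * x$3 + \<beta> * (x$2)^c) / x$0)"
    "pbr c (\<lambda>y. y$2) f4 x = of_nat c * x$2 * ((x$1 * x$3 + \<beta> * (x$2)^c) / x$0)"
    "pbr c (\<lambda>y. y$3) f4 x = x$3 * ((x$1 * x$3 + \<beta> * (x$2)^c) / x$0)"
  unfolding f4_def x4_pd_gen[OF x0] lcc by (simp_all add: field_simps x0)

lemma phi_fun: "(\<lambda>y. phi c \<beta> y $ 0) = (\<lambda>y. y$1)" "(\<lambda>y. phi c \<beta> y $ 1) = (\<lambda>y. y$2)"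
  "(\<lambda>y. phi c \<beta> y $ 2) = (\<lambda>y. y$3)"
  "(\<lambda>y. phi c \<beta> y $ 3) = (\<lambda>y. (y$1 * y$3 + \<beta> * (y$2)^c) / y$0)"
  by (simp_all add: phi_comp)

lemma poisson:
  assumes x0: "x$0 \<noteq> 0"
  shows "pbr c (\<lambda>y. phi c \<beta> y $ i) (\<lambda>y. phi c \<beta> y $ j) x = lc_bracket c (phi c \<beta> x) $ i $ j"
proof -
  note X = x4_pd[OF x0, of c \<beta>]
  have c00: "pbr c (\<lambda>y. phi c \<beta> y $ 0) (\<lambda>y. phi c \<beta> y $ 0) x = lc_bracket c (phi c \<beta> x) $ 0 $ 0"
    by (simp add: phi_fun pbr_left pd_coord sum4 lcb lcc phi_comp)
  have c01: "pbr c (\<lambda>y. phi c \<beta> y $ 0) (\<lambda>y. phi c \<beta> y $ 1) x = lc_bracket c (phi c \<beta> x) $ 0 $ 1"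
    by (simp add: phi_fun pbr_left pd_coord sum4 lcb lcc phi_comp)
  have c02: "pbr c (\<lambda>y. phi c \<beta> y $ 0) (\<lambda>y. phi c \<beta> y $ 2) x = lc_bracket c (phi c \<beta> x) $ 0 $ 2"
    by (simp add: phi_fun pbr_left pd_coord sum4 lcb lcc phi_comp)
  have c03: "pbr c (\<lambda>y. phi c \<beta> y $ 0) (\<lambda>y. phi c \<beta> y $ 3) x = lc_bracket c (phi c \<beta> x) $ 0 $ 3"
    by (simp only: phi_fun X, simp add: lcb lcc phi_comp field_simps x0)
  have c10: "pbr c (\<lambda>y. phi c \<beta> y $ 1) (\<lambda>y. phi c \<beta> y $ 0) x = lc_bracket c (phi c \<beta> x) $ 1 $ 0"
    by (simp add: phi_fun pbr_left pd_coord sum4 lcb lcc phi_comp)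
  have c11: "pbr c (\<lambda>y. phi c \<beta> y $ 1) (\<lambda>y. phi c \<beta> y $ 1) x = lc_bracket c (phi c \<beta> x) $ 1 $ 1"
    by (simp add: phi_fun pbr_left pd_coord sum4 lcb lcc phi_comp)
  have c12: "pbr c (\<lambda>y. phi c \<beta> y $ 1) (\<lambda>y. phi c \<beta> y $ 2) x = lc_bracket c (phi c \<beta> x) $ 1 $ 2"
    by (simp add: phi_fun pbr_left pd_coord sum4 lcb lcc phi_comp)
  have c13: "pbr c (\<lambda>y. phi c \<beta> y $ 1) (\<lambda>y. phi c \<beta> y $ 3) x = lc_bracket c (phi c \<beta> x) $ 1 $ 3"
    by (simp only: phi_fun X, simp add: lcb lcc phi_comp field_simps x0)
  have c20: "pbr c (\<lambda>y. phi c \<beta> y $ 2) (\<lambda>y. phi c \<beta> y $ 0) x = lc_bracket c (phi c \<beta> x) $ 2 $ 0"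
    by (simp add: phi_fun pbr_left pd_coord sum4 lcb lcc phi_comp)
  have c21: "pbr c (\<lambda>y. phi c \<beta> y $ 2) (\<lambda>y. phi c \<beta> y $ 1) x = lc_bracket c (phi c \<beta> x) $ 2 $ 1"
    by (simp add: phi_fun pbr_left pd_coord sum4 lcb lcc phi_comp)
  have c22: "pbr c (\<lambda>y. phi c \<beta> y $ 2) (\<lambda>y. phi c \<beta> y $ 2) x = lc_bracket c (phi c \<beta> x) $ 2 $ 2"
    by (simp add: phi_fun pbr_left pd_coord sum4 lcb lcc phi_comp)
  have c23: "pbr c (\<lambda>y. phi c \<beta> y $ 2) (\<lambda>y. phi c \<beta> y $ 3) x = lc_bracket c (phi c \<beta> x) $ 2 $ 3"
    by (simp only: phi_fun X, simp add: lcb lcc phi_comp field_simps x0)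
  have c30: "pbr c (\<lambda>y. phi c \<beta> y $ 3) (\<lambda>y. phi c \<beta> y $ 0) x = lc_bracket c (phi c \<beta> x) $ 3 $ 0"
    by (simp only: phi_fun, subst pbr_anti, simp only: X, simp add: lcb lcc phi_comp field_simps x0)
  have c31: "pbr c (\<lambda>y. phi c \<beta> y $ 3) (\<lambda>y. phi c \<beta> y $ 1) x = lc_bracket c (phi c \<beta> x) $ 3 $ 1"
    by (simp only: phi_fun, subst pbr_anti, simp only: X, simp add: lcb lcc phi_comp field_simps x0)
  have c32: "pbr c (\<lambda>y. phi c \<beta> y $ 3) (\<lambda>y. phi c \<beta> y $ 2) x = lc_bracket c (phi c \<beta> x) $ 3 $ 2"
    by (simp only: phi_fun, subst pbr_anti, simp only: X, simp add: lcb lcc phi_comp field_simps x0)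
  have c33: "pbr c (\<lambda>y. phi c \<beta> y $ 3) (\<lambda>y. phi c \<beta> y $ 3) x = lc_bracket c (phi c \<beta> x) $ 3 $ 3"
    by (simp add: pbr_self lcb lcc)
  have "\<forall>i j. pbr c (\<lambda>y. phi c \<beta> y $ i) (\<lambda>y. phi c \<beta> y $ j) x = lc_bracket c (phi c \<beta> x) $ i $ j"
    unfolding all4 using c00 c01 c02 c03 c10 c11 c12 c13 c20 c21 c22 c23 c30 c31 c32 c33 by blast
  then show ?thesis by blast
qed

definition xs :: "nat \<Rightarrow> complex \<Rightarrow> complex^4 \<Rightarrow> nat \<Rightarrow> complex" where
  "xs c \<beta> u n = ((phi c \<beta> ^^ n) u) $ 0"

lemma funpow_Suc_app: "(f ^^ Suc n) u = f ((f ^^ n) u)"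
  by simp

lemma xs_comp: "((phi c \<beta> ^^ n) u) $ 1 = xs c \<beta> u (n+1)"
  "((phi c \<beta> ^^ n) u) $ 2 = xs c \<beta> u (n+2)"
  "((phi c \<beta> ^^ n) u) $ 3 = xs c \<beta> u (n+3)"
proof -
  show 1: "\<And>n. ((phi c \<beta> ^^ n) u) $ 1 = xs c \<beta> u (n+1)"
    by (simp add: xs_def phi_comp)
  show 2: "\<And>n. ((phi c \<beta> ^^ n) u) $ 2 = xs c \<beta> u (n+2)"
  proof -
    fix n
    have "((phi c \<beta> ^^ (n+1)) u) $ 1 = ((phi c \<beta> ^^ n) u) $ 2" by (simp add: phi_comp)
    thus "((phi c \<beta> ^^ n) u) $ 2 = xs c \<beta> u (n+2)" using 1[of "n+1"] by simp
  qed
  have "((phi c \<beta> ^^ (n+1)) u) $ 2 = ((phi c \<beta> ^^ n) u) $ 3" by (simp add: phi_comp)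
  thus "((phi c \<beta> ^^ n) u) $ 3 = xs c \<beta> u (n+3)" using 2[of "n+1"] by (simp add: numeral_3_eq_3)
qed

lemma xs_init: "xs c \<beta> u 0 = u$0" "xs c \<beta> u 1 = u$1" "xs c \<beta> u 2 = u$2" "xs c \<beta> u 3 = u$3"
  using xs_comp[where c=c and \<beta>=\<beta> and n=0 and u=u] by (simp_all add: xs_def numeral_2_eq_2 numeral_3_eq_3)

lemma xs_rec: "xs c \<beta> u (n+4) =
   (xs c \<beta> u (n+1) * xs c \<beta> u (n+3) + \<beta> * (xs c \<beta> u (n+2))^c) / xs c \<beta> u n"
proof -
  have "xs c \<beta> u (n+4) = ((phi c \<beta> ^^ (n+1)) u) $ 3"
    using xs_comp(3)[where c=c and \<beta>=\<beta> and n="n+1" and u=u] by (simp add: ac_simps)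
  also have "\<dots> = phi c \<beta> ((phi c \<beta> ^^ n) u) $ 3" by simp
  also have "\<dots> = (xs c \<beta> u (n+1) * xs c \<beta> u (n+3) + \<beta> * (xs c \<beta> u (n+2))^c) / xs c \<beta> u n"
    by (simp only: phi_comp xs_comp) (simp add: xs_def)
  finally show ?thesis .
qed

lemma xs_rec': "m \<ge> 4 \<Longrightarrow> xs c \<beta> u m =
   (xs c \<beta> u (m-3) * xs c \<beta> u (m-1) + \<beta> * (xs c \<beta> u (m-2))^c) / xs c \<beta> u (m-4)"
proof -
  assume "m \<ge> 4"
  then obtain n where m: "m = n + 4" by (metis add.commute le_add_diff_inverse)
  show ?thesis unfolding m using xs_rec[where c=c and \<beta>=\<beta> and u=u and n=n] by (simp add: ac_simps)
qed

lemma xseq_nat: "xseq c \<beta> u (int n) = xs c \<beta> u n"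
  by (simp add: xseq_def xs_def)

lemma tendsto_Bfun:
  fixes f :: "'a \<Rightarrow> 'b::real_normed_vector"
  assumes "(f \<longlongrightarrow> l) F" shows "Bfun f F"
proof (rule BfunI)
  have "eventually (\<lambda>x. dist (f x) l < 1) F" using tendstoD[OF assms, of 1] by simp
  thus "eventually (\<lambda>x. norm (f x) \<le> norm l + 1) F"
  proof (rule eventually_mono)
    fix x assume "dist (f x) l < 1"
    hence "norm (f x - l) < 1" by (simp add: dist_norm)
    moreover have "norm (f x) \<le> norm (f x - l) + norm l" using norm_triangle_ineq[of "f x - l" l] by simp
    ultimately show "norm (f x) \<le> norm l + 1" by simp
  qed
qed

lemma Bfun_cong_ev:
  fixes f g :: "'a \<Rightarrow> 'b::real_normed_vector"
  assumes "Bfun f F" "eventually (\<lambda>x. f x = g x) F" shows "Bfun g F"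
proof -
  from BfunE[OF assms(1)] obtain B where "0 < B" and evB: "eventually (\<lambda>x. norm (f x) \<le> B) F" by blast
  from assms(2) evB have "eventually (\<lambda>x. norm (g x) \<le> B) F" by eventually_elim simp
  thus ?thesis by (rule BfunI)
qed

definition G1 :: "nat \<Rightarrow> complex \<Rightarrow> complex \<Rightarrow> complex \<Rightarrow> complex \<Rightarrow> complex \<Rightarrow> complex \<Rightarrow> complex" where
  "G1 c \<beta> x0 x1 x2 x3 e = (let x5 = (x2 * e + \<beta> * x3^c) / x1; x6 = (x3 * x5 + \<beta> * e^c) / x2; y = x3 * x5 / x2 in
     x5 * x6 / x3 + \<beta> * x5^c * (x2^(c+1) + x3^c * x0) / (x1 * x3 * x2^c)
     + \<beta> * (\<beta> * e^(c-1) / x2) * (\<Sum>i<c. y^(c - Suc i) * x6^i))"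

definition G0 :: "complex \<Rightarrow> complex \<Rightarrow> complex \<Rightarrow> complex \<Rightarrow> complex \<Rightarrow> complex \<Rightarrow> complex" where
  "G0 \<beta> x0 x1 x2 x3 e = (let x5 = (x2 * e + \<beta>) / x1; x6 = (x3 * x5 + \<beta>) / x2 in
     x5 * x6 / x3 + \<beta> * (x2 + x0) / (x1 * x3))"

lemma x8_G1:
  assumes c: "c \<ge> 1" and nz: "x0 \<noteq> 0" "x1 \<noteq> 0" "x2 \<noteq> 0" "x3 \<noteq> 0" "e \<noteq> 0"
    and con: "x1 * x3 + \<beta> * x2^c = e * x0"
    and x5: "x5 = (x2 * e + \<beta> * x3^c) / x1" and x6: "x6 = (x3 * x5 + \<beta> * e^c) / x2"
    and x7: "x7 = (e * x6 + \<beta> * x5^c) / x3"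
  shows "(x5 * x7 + \<beta> * x6^c) / e = G1 c \<beta> x0 x1 x2 x3 e"
proof -
  define y where "y = x3 * x5 / x2"
  define S where "S = (\<Sum>i<c. y^(c - Suc i) * x6^i)"
  have 1: "x5 * x7 = e * (x5 * x6 / x3) + \<beta> * x5^(c+1) / x3"
    using nz by (simp add: x7 field_simps)
  have 2: "x6^c - y^c = (x6 - y) * S" unfolding S_def by (rule power_diff_sumr2)
  have ec: "e^c = e * e^(c-1)" using c by (cases c) auto
  have 3: "x6 - y = e * (\<beta> * e^(c-1) / x2)"
    using nz by (simp add: x6 y_def ec field_simps)
  have 4: "x5 / x3 + x3^c / x2^c = e * (x2^(c+1) + x3^c * x0) / (x1 * x3 * x2^c)"
  proof -
    have "x5 * x1 * x2^c + x3 * x3^c * x1 = x2 * x2^c * e + x3^c * (x1 * x3 + \<beta> * x2^c)"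
      using nz by (simp add: x5 field_simps)
    also have "\<dots> = e * (x2 * x2^c + x3^c * x0)" by (simp add: con algebra_simps)
    finally have h: "x5 * x1 * x2^c + x3 * x3^c * x1 = e * (x2 * x2^c + x3^c * x0)" .
    have "x5 / x3 + x3^c / x2^c = (x5 * x1 * x2^c + x3 * x3^c * x1) / (x1 * x3 * x2^c)"
      using nz by (simp add: field_simps)
    also have "\<dots> = e * (x2 * x2^c + x3^c * x0) / (x1 * x3 * x2^c)" using h by simp
    finally show ?thesis by simp
  qed
  have 5: "x5^(c+1) / x3 + y^c = e * (x5^c * (x2^(c+1) + x3^c * x0) / (x1 * x3 * x2^c))"
  proof -
    have a: "y^c = x5^c * (x3^c / x2^c)" by (simp add: y_def power_mult_distrib power_divide)
    have b: "x5^(c+1) / x3 = x5^c * (x5 / x3)" by simp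
    have "x5^(c+1) / x3 + y^c = x5^c * (x5 / x3 + x3^c / x2^c)"
      unfolding a b by (simp only: distrib_left)
    thus ?thesis using 4 by simp
  qed
  have "x5 * x7 + \<beta> * x6^c = e * (x5 * x6 / x3) + \<beta> * (x5^(c+1) / x3 + y^c) + \<beta> * (x6^c - y^c)"
    using 1 by (simp add: algebra_simps)
  also have "\<dots> = e * (x5 * x6 / x3 + \<beta> * (x5^c * (x2^(c+1) + x3^c * x0) / (x1 * x3 * x2^c))
        + \<beta> * (\<beta> * e^(c-1) / x2) * S)"
    unfolding 5 2 3 by (simp add: algebra_simps)
  finally have "(x5 * x7 + \<beta> * x6^c) / e = x5 * x6 / x3 + \<beta> * (x5^c * (x2^(c+1) + x3^c * x0) / (x1 * x3 * x2^c))
        + \<beta> * (\<beta> * e^(c-1) / x2) * S"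
    using nz by simp
  thus ?thesis unfolding G1_def Let_def S_def y_def x5[symmetric] x6[symmetric] by simp
qed

lemma x8_G0:
  assumes nz: "x0 \<noteq> 0" "x1 \<noteq> 0" "x2 \<noteq> 0" "x3 \<noteq> 0" "e \<noteq> 0"
    and con: "x1 * x3 + \<beta> = e * x0"
    and x5: "x5 = (x2 * e + \<beta>) / x1" and x6: "x6 = (x3 * x5 + \<beta>) / x2"
    and x7: "x7 = (e * x6 + \<beta>) / x3"
  shows "(x5 * x7 + \<beta>) / e = G0 \<beta> x0 x1 x2 x3 e"
proof -
  have h: "x5 + x3 = e * (x2 + x0) / x1"
    using nz con by (simp add: x5 field_simps)
  have "x5 * x7 + \<beta> = e * (x5 * x6 / x3) + \<beta> * (x5 + x3) / x3"
    using nz by (simp add: x7 field_simps)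
  also have "\<dots> = e * (x5 * x6 / x3 + \<beta> * (x2 + x0) / (x1 * x3))"
    unfolding h using nz by (simp add: field_simps)
  finally show ?thesis unfolding G0_def Let_def x5[symmetric] x6[symmetric] using nz by simp
qed

lemma G1_tendsto:
  assumes "(a0 \<longlongrightarrow> q0) F" "(a1 \<longlongrightarrow> q1) F" "(a2 \<longlongrightarrow> q2) F" "(a3 \<longlongrightarrow> q3) F" "(e \<longlongrightarrow> 0) F"
    and "q1 \<noteq> 0" "q2 \<noteq> 0" "q3 \<noteq> 0"
  shows "((\<lambda>t. G1 c \<beta> (a0 t) (a1 t) (a2 t) (a3 t) (e t)) \<longlongrightarrow> G1 c \<beta> q0 q1 q2 q3 0) F"
  unfolding G1_def Let_def
  by (intro tendsto_intros assms) (simp add: assms)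

lemma G0_tendsto:
  assumes "(a0 \<longlongrightarrow> q0) F" "(a1 \<longlongrightarrow> q1) F" "(a2 \<longlongrightarrow> q2) F" "(a3 \<longlongrightarrow> q3) F" "(e \<longlongrightarrow> 0) F"
    and "q1 \<noteq> 0" "q2 \<noteq> 0" "q3 \<noteq> 0"
  shows "((\<lambda>t. G0 \<beta> (a0 t) (a1 t) (a2 t) (a3 t) (e t)) \<longlongrightarrow> G0 \<beta> q0 q1 q2 q3 0) F"
  unfolding G0_def Let_def
  by (intro tendsto_intros assms) (simp add: assms)

lemma confinement:
  assumes lim: "(u \<longlongrightarrow> p) (at (0::complex))" and p: "\<forall>i. p $ i \<noteq> 0"
    and ev: "\<forall>\<^sub>F \<epsilon> in at 0. xseq c \<beta> (u \<epsilon>) 4 = \<epsilon>"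
  shows "Bfun (\<lambda>\<epsilon>. xseq c \<beta> (u \<epsilon>) 8) (at 0)"
proof -
  have li: "((\<lambda>e. u e $ i) \<longlongrightarrow> p $ i) (at 0)" for i by (intro tendsto_intros lim)
  have evnz: "eventually (\<lambda>e. u e $ i \<noteq> 0) (at 0)" for i
    using tendsto_imp_eventually_ne[OF li p[rule_format]] .
  have ev0: "eventually (\<lambda>e::complex. e \<noteq> 0) (at 0)" by (simp add: eventually_at_filter)
  define H where "H = (\<lambda>e. if c = 0 then G0 \<beta> (u e $ 0) (u e $ 1) (u e $ 2) (u e $ 3) e
                            else G1 c \<beta> (u e $ 0) (u e $ 1) (u e $ 2) (u e $ 3) e)"
  have "Bfun H (at 0)"
  proof (cases "c = 0")
    case True
    have "((\<lambda>e. G0 \<beta> (u e $ 0) (u e $ 1) (u e $ 2) (u e $ 3) e) \<longlongrightarrow> G0 \<beta> (p $ 0) (p $ 1) (p $ 2) (p $ 3) 0) (at 0)"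
      by (rule G0_tendsto[OF li li li li tendsto_ident_at]) (use p in auto)
    thus ?thesis unfolding H_def using True by (simp add: tendsto_Bfun)
  next
    case False
    have "((\<lambda>e. G1 c \<beta> (u e $ 0) (u e $ 1) (u e $ 2) (u e $ 3) e) \<longlongrightarrow> G1 c \<beta> (p $ 0) (p $ 1) (p $ 2) (p $ 3) 0) (at 0)"
      by (rule G1_tendsto[OF li li li li tendsto_ident_at]) (use p in auto)
    thus ?thesis unfolding H_def using False by (simp add: tendsto_Bfun)
  qed
  moreover have "eventually (\<lambda>e. H e = xseq c \<beta> (u e) 8) (at 0)"
    using ev ev0 evnz[of 0] evnz[of 1] evnz[of 2] evnz[of 3]
  proof eventually_elim
    case (elim e)
    let ?x = "xs c \<beta> (u e)"
    have x4: "?x 4 = e" using elim(1) xseq_nat[where c=c and \<beta>=\<beta> and u="u e" and n=4] by simp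
    have r4: "?x 4 = (?x 1 * ?x 3 + \<beta> * (?x 2)^c) / ?x 0" using xs_rec'[where c=c and \<beta>=\<beta> and u="u e" and m=4] by simp
    have r5: "?x 5 = (?x 2 * ?x 4 + \<beta> * (?x 3)^c) / ?x 1" using xs_rec'[where c=c and \<beta>=\<beta> and u="u e" and m=5] by simp
    have r6: "?x 6 = (?x 3 * ?x 5 + \<beta> * (?x 4)^c) / ?x 2" using xs_rec'[where c=c and \<beta>=\<beta> and u="u e" and m=6] by simp
    have r7: "?x 7 = (?x 4 * ?x 6 + \<beta> * (?x 5)^c) / ?x 3" using xs_rec'[where c=c and \<beta>=\<beta> and u="u e" and m=7] by simp
    have r8: "?x 8 = (?x 5 * ?x 7 + \<beta> * (?x 6)^c) / ?x 4" using xs_rec'[where c=c and \<beta>=\<beta> and u="u e" and m=8] by simp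
    have nz: "?x 0 \<noteq> 0" "?x 1 \<noteq> 0" "?x 2 \<noteq> 0" "?x 3 \<noteq> 0" unfolding xs_init using elim by auto
    have con: "?x 1 * ?x 3 + \<beta> * (?x 2)^c = e * ?x 0" using r4 x4 nz by (simp add: field_simps)
    have s5: "?x 5 = (?x 2 * e + \<beta> * (?x 3)^c) / ?x 1" using r5 unfolding x4 .
    have s6: "?x 6 = (?x 3 * ?x 5 + \<beta> * e^c) / ?x 2" using r6 unfolding x4 .
    have s7: "?x 7 = (e * ?x 6 + \<beta> * (?x 5)^c) / ?x 3" using r7 unfolding x4 .
    have s8: "?x 8 = (?x 5 * ?x 7 + \<beta> * (?x 6)^c) / e" using r8 unfolding x4 .
    have ui: "u e $ 0 = ?x 0" "u e $ 1 = ?x 1" "u e $ 2 = ?x 2" "u e $ 3 = ?x 3" unfolding xs_init by auto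
    have "xseq c \<beta> (u e) 8 = ?x 8" using xseq_nat[where c=c and \<beta>=\<beta> and u="u e" and n=8] by simp
    also have "\<dots> = H e"
    proof (cases "c = 0")
      case True
      have con0: "?x 1 * ?x 3 + \<beta> = e * ?x 0" using con True by simp
      have s5': "?x 5 = (?x 2 * e + \<beta>) / ?x 1" using s5 True by simp
      have s6': "?x 6 = (?x 3 * ?x 5 + \<beta>) / ?x 2" using s6 True by simp
      have s7': "?x 7 = (e * ?x 6 + \<beta>) / ?x 3" using s7 True by simp
      have s8': "?x 8 = (?x 5 * ?x 7 + \<beta>) / e" using s8 True by simp
      show ?thesis unfolding H_def ui s8' using True x8_G0[OF nz elim(2) con0 s5' s6' s7'] by simp
    next
      case False
      hence c1: "c \<ge> 1" by simp
      show ?thesis unfolding H_def ui s8 using False x8_G1[OF c1 nz elim(2) con s5 s6 s7] by simp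
    qed
    finally show ?case by simp
  qed
  ultimately show ?thesis by (rule Bfun_cong_ev)
qed

type_synonym R = "int poly poly poly poly poly"

definition rh :: "('a::comm_ring_1 \<Rightarrow> 'b::comm_ring_1) \<Rightarrow> bool" where
  "rh h \<longleftrightarrow> h 0 = 0 \<and> h 1 = 1 \<and> (\<forall>x y. h (x + y) = h x + h y) \<and> (\<forall>x y. h (x * y) = h x * h y)"

lemma rhD: assumes "rh h" shows "h 0 = 0" "h 1 = 1" "h (x + y) = h x + h y" "h (x * y) = h x * h y"
  using assms by (auto simp: rh_def)

lemma rh_minus: assumes "rh h" shows "h (- x) = - h x"
proof -
  have "h (x + - x) = h x + h (- x)" using rhD(3)[OF assms] .
  hence "0 = h x + h (- x)" using rhD(1)[OF assms] by simp
  thus ?thesis by (simp add: eq_neg_iff_add_eq_0 add.commute)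
qed

lemma rh_diff: assumes "rh h" shows "h (x - y) = h x - h y"
  using rhD(3)[OF assms, of x "- y"] rh_minus[OF assms, of y] by simp

lemma rh_power: assumes "rh h" shows "h (x ^ n) = h x ^ n"
  by (induction n) (simp_all add: rhD[OF assms])

lemma rh_of_int: "rh (of_int :: int \<Rightarrow> 'a::comm_ring_1)"
  by (simp add: rh_def)

lemma map_poly_add_rh: assumes "rh h" shows "map_poly h (p + q) = map_poly h p + map_poly h q"
  by (rule poly_eqI) (simp add: coeff_map_poly rhD[OF assms])

lemma poly_map_pCons: assumes "rh h"
  shows "poly (map_poly h (pCons a p)) z = h a + z * poly (map_poly h p) z"
  by (simp add: map_poly_pCons rhD(1)[OF assms])

lemma rh_poly: assumes h: "rh h" shows "rh (\<lambda>p. poly (map_poly h p) z)"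
proof -
  have add: "poly (map_poly h (p + q)) z = poly (map_poly h p) z + poly (map_poly h q) z" for p q
    by (simp add: map_poly_add_rh[OF h])
  have sm: "poly (map_poly h (smult a q)) z = h a * poly (map_poly h q) z" for a q
    by (simp add: map_poly_smult rhD[OF h])
  have mult: "poly (map_poly h (p * q)) z = poly (map_poly h p) z * poly (map_poly h q) z" for p q
  proof (induction p)
    case 0 thus ?case by simp
  next
    case (pCons a p)
    have "poly (map_poly h (pCons a p * q)) z = h a * poly (map_poly h q) z + z * poly (map_poly h (p * q)) z"
      by (simp only: mult_pCons_left add sm poly_map_pCons[OF h] rhD(1)[OF h] add_0_left)
    also have "\<dots> = poly (map_poly h (pCons a p)) z * poly (map_poly h q) z"
      by (simp add: pCons.IH poly_map_pCons[OF h] algebra_simps)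
    finally show ?case .
  qed
  show ?thesis unfolding rh_def using add mult by (simp add: rhD[OF h])
qed

definition ev1 :: "complex \<Rightarrow> int poly \<Rightarrow> complex" where
  "ev1 b = (\<lambda>q. poly (map_poly of_int q) b)"
definition ev2 :: "complex \<Rightarrow> complex \<Rightarrow> int poly poly \<Rightarrow> complex" where
  "ev2 x3 b = (\<lambda>q. poly (map_poly (ev1 b) q) x3)"
definition ev3 :: "complex \<Rightarrow> complex \<Rightarrow> complex \<Rightarrow> int poly poly poly \<Rightarrow> complex" where
  "ev3 x2 x3 b = (\<lambda>q. poly (map_poly (ev2 x3 b) q) x2)"
definition ev4 :: "complex \<Rightarrow> complex \<Rightarrow> complex \<Rightarrow> complex \<Rightarrow> int poly poly poly poly \<Rightarrow> complex" where
  "ev4 x1 x2 x3 b = (\<lambda>q. poly (map_poly (ev3 x2 x3 b) q) x1)"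
definition ev5 :: "complex \<Rightarrow> complex \<Rightarrow> complex \<Rightarrow> complex \<Rightarrow> complex \<Rightarrow> R \<Rightarrow> complex" where
  "ev5 x0 x1 x2 x3 b = (\<lambda>q. poly (map_poly (ev4 x1 x2 x3 b) q) x0)"

definition evR :: "R \<Rightarrow> complex^4 \<Rightarrow> complex \<Rightarrow> complex" where
  "evR a x b = ev5 (x$0) (x$1) (x$2) (x$3) b a"

lemma rh_ev1: "rh (ev1 b)" unfolding ev1_def by (rule rh_poly[OF rh_of_int])
lemma rh_ev2: "rh (ev2 x3 b)" unfolding ev2_def by (rule rh_poly[OF rh_ev1])
lemma rh_ev3: "rh (ev3 x2 x3 b)" unfolding ev3_def by (rule rh_poly[OF rh_ev2])
lemma rh_ev4: "rh (ev4 x1 x2 x3 b)" unfolding ev4_def by (rule rh_poly[OF rh_ev3])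
lemma rh_ev5: "rh (ev5 x0 x1 x2 x3 b)" unfolding ev5_def by (rule rh_poly[OF rh_ev4])

lemma rh_evR: "rh (\<lambda>a. evR a x b)"
  unfolding evR_def using rh_ev5 by simp

lemma evR_hom: "evR 0 x b = 0" "evR 1 x b = 1" "evR (p + q) x b = evR p x b + evR q x b"
  "evR (p * q) x b = evR p x b * evR q x b" "evR (- p) x b = - evR p x b"
  "evR (p - q) x b = evR p x b - evR q x b" "evR (p ^ n) x b = evR p x b ^ n"
  using rhD[OF rh_evR] rh_minus[OF rh_evR] rh_diff[OF rh_evR] rh_power[OF rh_evR] by auto

definition V0 :: R where "V0 = [:0, 1:]"
definition V1 :: R where "V1 = [:[:0, 1:]:]"
definition V2 :: R where "V2 = [:[:[:0, 1:]:]:]"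
definition V3 :: R where "V3 = [:[:[:[:0, 1:]:]:]:]"
definition Bv :: R where "Bv = [:[:[:[:[:0, 1:]:]:]:]:]"
definition MM :: R where "MM = V0 * V1 * V2 * V3"

lemma ev_zero: "ev1 b 0 = 0" "ev2 x3 b 0 = 0" "ev3 x2 x3 b 0 = 0" "ev4 x1 x2 x3 b 0 = 0" "ev5 x0 x1 x2 x3 b 0 = 0"
  by (simp_all add: rhD(1)[OF rh_ev1] rhD(1)[OF rh_ev2] rhD(1)[OF rh_ev3] rhD(1)[OF rh_ev4] rhD(1)[OF rh_ev5])

lemma ev_one: "ev1 b 1 = 1" "ev2 x3 b 1 = 1" "ev3 x2 x3 b 1 = 1" "ev4 x1 x2 x3 b 1 = 1" "ev5 x0 x1 x2 x3 b 1 = 1"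
  by (simp_all add: rhD(2)[OF rh_ev1] rhD(2)[OF rh_ev2] rhD(2)[OF rh_ev3] rhD(2)[OF rh_ev4] rhD(2)[OF rh_ev5])

lemma ev_pCons: "ev1 b (pCons a p) = of_int a + b * ev1 b p"
  "ev2 x3 b (pCons a2 p2) = ev1 b a2 + x3 * ev2 x3 b p2"
  "ev3 x2 x3 b (pCons a3 p3) = ev2 x3 b a3 + x2 * ev3 x2 x3 b p3"
  "ev4 x1 x2 x3 b (pCons a4 p4) = ev3 x2 x3 b a4 + x1 * ev4 x1 x2 x3 b p4"
  "ev5 x0 x1 x2 x3 b (pCons a5 p5) = ev4 x1 x2 x3 b a5 + x0 * ev5 x0 x1 x2 x3 b p5"
  unfolding ev1_def ev2_def ev3_def ev4_def ev5_def
  by (simp_all only: poly_map_pCons[OF rh_of_int] poly_map_pCons[OF rh_ev1[unfolded ev1_def]]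
    poly_map_pCons[OF rh_ev2[unfolded ev2_def ev1_def]] poly_map_pCons[OF rh_ev3[unfolded ev3_def ev2_def ev1_def]]
    poly_map_pCons[OF rh_ev4[unfolded ev4_def ev3_def ev2_def ev1_def]])

lemma ev_const0: "ev1 b 0 = 0" by (rule ev_zero)

lemma evR_vars: "evR V0 x b = x$0" "evR V1 x b = x$1" "evR V2 x b = x$2" "evR V3 x b = x$3" "evR Bv x b = b"
  unfolding evR_def V0_def V1_def V2_def V3_def Bv_def
  by (simp_all add: ev_pCons ev_zero ev_one)

lemma evR_MM: "evR MM x b = x$0 * x$1 * x$2 * x$3"
  unfolding MM_def by (simp add: evR_hom evR_vars)

subsection \<open>Polynomial functions are Laurent\<close>

lemma lau_zero: "(\<lambda>x b. 0) \<in> laurent"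
  using laurent.const[of 0] by simp
lemma lau_one: "(\<lambda>x b. 1) \<in> laurent"
  using laurent.const[of 1] by simp

lemma lau1: "(\<lambda>x b. ev1 b q) \<in> laurent"
proof (induction q)
  case 0 show ?case by (simp add: ev_zero lau_zero)
next
  case (pCons a p)
  show ?case unfolding ev_pCons by (intro laurent.add laurent.mult laurent.const laurent.par pCons.IH)
qed

lemma lau2: "(\<lambda>x b. ev2 (x$3) b q) \<in> laurent"
proof (induction q)
  case 0 show ?case by (simp add: ev_zero lau_zero)
next
  case (pCons a p)
  show ?case unfolding ev_pCons by (intro laurent.add laurent.mult laurent.var lau1 pCons.IH)
qed

lemma lau3: "(\<lambda>x b. ev3 (x$2) (x$3) b q) \<in> laurent"
proof (induction q)
  case 0 show ?case by (simp add: ev_zero lau_zero)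
next
  case (pCons a p)
  show ?case unfolding ev_pCons by (intro laurent.add laurent.mult laurent.var lau2 pCons.IH)
qed

lemma lau4: "(\<lambda>x b. ev4 (x$1) (x$2) (x$3) b q) \<in> laurent"
proof (induction q)
  case 0 show ?case by (simp add: ev_zero lau_zero)
next
  case (pCons a p)
  show ?case unfolding ev_pCons by (intro laurent.add laurent.mult laurent.var lau3 pCons.IH)
qed

lemma lau_evR: "(\<lambda>x b. evR q x b) \<in> laurent"
  unfolding evR_def
proof (induction q)
  case 0 show ?case by (simp add: ev_zero lau_zero)
next
  case (pCons a p)
  show ?case unfolding ev_pCons by (intro laurent.add laurent.mult laurent.var lau4 pCons.IH)
qed

lemma lau_pow: "f \<in> laurent \<Longrightarrow> (\<lambda>x b. f x b ^ k) \<in> laurent"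
  by (induction k) (simp_all add: lau_one laurent.mult)

lemma lau_invmono: "(\<lambda>x b. (inverse (x$0) * inverse (x$1) * inverse (x$2) * inverse (x$3)) ^ k) \<in> laurent"
  by (intro lau_pow laurent.mult laurent.inv)

subsection \<open>Laurent elements of the fraction field\<close>

abbreviation tf :: "R \<Rightarrow> R fract" where "tf \<equiv> to_fract"

lemma tf_power [simp]: "tf (x ^ n) = tf x ^ n"
  by (induction n) simp_all

lemma V_nz: "V0 \<noteq> 0" "V1 \<noteq> 0" "V2 \<noteq> 0" "V3 \<noteq> 0" "Bv \<noteq> 0"
  by (simp_all add: V0_def V1_def V2_def V3_def Bv_def)

lemma MM_nz: "MM \<noteq> 0" by (simp add: MM_def V_nz)

definition Lset :: "R fract set" where
  "Lset = {f. \<exists>a k. f = tf a / tf MM ^ k}"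

lemma LsetI: "f = tf a / tf MM ^ k \<Longrightarrow> f \<in> Lset"
  unfolding Lset_def by blast

lemma LsetE: assumes "f \<in> Lset" obtains a k where "f = tf a / tf MM ^ k"
  using assms unfolding Lset_def by blast

lemma tfMM_nz: "tf MM ^ k \<noteq> 0" by (simp add: MM_nz)

lemma L_tf: "tf a \<in> Lset" by (rule LsetI[of _ a 0]) simp

lemma L_0: "0 \<in> Lset" using L_tf[of 0] by simp
lemma L_1: "1 \<in> Lset" using L_tf[of 1] by simp

lemma L_add: assumes "f \<in> Lset" "g \<in> Lset" shows "f + g \<in> Lset"
proof -
  obtain a k where f: "f = tf a / tf MM ^ k" using assms(1) by (rule LsetE)
  obtain b l where g: "g = tf b / tf MM ^ l" using assms(2) by (rule LsetE)
  have "f + g = tf (a * MM ^ l + b * MM ^ k) / tf MM ^ (k + l)"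
    unfolding f g using MM_nz by (simp add: field_simps power_add)
  thus ?thesis by (rule LsetI)
qed

lemma L_mult: assumes "f \<in> Lset" "g \<in> Lset" shows "f * g \<in> Lset"
proof -
  obtain a k where f: "f = tf a / tf MM ^ k" using assms(1) by (rule LsetE)
  obtain b l where g: "g = tf b / tf MM ^ l" using assms(2) by (rule LsetE)
  have "f * g = tf (a * b) / tf MM ^ (k + l)"
    unfolding f g using MM_nz by (simp add: field_simps power_add)
  thus ?thesis by (rule LsetI)
qed

lemma L_uminus: assumes "f \<in> Lset" shows "- f \<in> Lset"
proof -
  obtain a k where f: "f = tf a / tf MM ^ k" using assms(1) by (rule LsetE)
  have "- f = tf (- a) / tf MM ^ k" unfolding f by simp
  thus ?thesis by (rule LsetI)
qed

lemma L_diff: "f \<in> Lset \<Longrightarrow> g \<in> Lset \<Longrightarrow> f - g \<in> Lset"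
  using L_add[of f "- g"] L_uminus[of g] by simp

lemma L_pow: "f \<in> Lset \<Longrightarrow> f ^ n \<in> Lset"
  by (induction n) (simp_all add: L_1 L_mult)

lemma L_sum: "(\<And>i. i \<in> A \<Longrightarrow> f i \<in> Lset) \<Longrightarrow> sum f A \<in> Lset"
  by (induction A rule: infinite_finite_induct) (simp_all add: L_0 L_add)

lemma L_invMM: "inverse (tf MM) \<in> Lset"
  by (rule LsetI[of _ 1 1]) (simp add: divide_inverse)

lemma L_inv_div: assumes "w dvd MM ^ r" shows "inverse (tf w) \<in> Lset"
proof -
  obtain w2 where w2: "MM ^ r = w * w2" using assms by (auto elim: dvdE)
  have "w \<noteq> 0" using w2 MM_nz by auto
  hence "inverse (tf w) = tf w2 / tf MM ^ r"
  proof -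
    have "tf MM ^ r = tf w * tf w2" using w2 by (metis tf_power to_fract_mult)
    moreover have "w2 \<noteq> 0" using w2 MM_nz by auto
    ultimately show ?thesis using \<open>w \<noteq> 0\<close> MM_nz by (simp add: field_simps)
  qed
  thus ?thesis by (rule LsetI)
qed

lemma V_dvd_MM: "V0 dvd MM" "V1 dvd MM" "V2 dvd MM" "V3 dvd MM"
  unfolding MM_def
  by (rule dvdI[where k="V1 * V2 * V3"], simp add: ac_simps, rule dvdI[where k="V0 * V2 * V3"], simp add: ac_simps,
      rule dvdI[where k="V0 * V1 * V3"], simp add: ac_simps, rule dvdI[where k="V0 * V1 * V2"], simp add: ac_simps)

lemma L_invV: "inverse (tf V0) \<in> Lset" "inverse (tf V1) \<in> Lset" "inverse (tf V2) \<in> Lset" "inverse (tf V3) \<in> Lset"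
  using L_inv_div[of _ 1] V_dvd_MM by simp_all

definition Ev :: "complex^4 \<Rightarrow> complex \<Rightarrow> R fract \<Rightarrow> complex" where
  "Ev x b f = (THE v. \<exists>a k. f = tf a / tf MM ^ k \<and> v = evR a x b / evR MM x b ^ k)"

lemma rep_eq:
  assumes "tf a / tf MM ^ k = tf a' / tf MM ^ k'"
  shows "a * MM ^ k' = a' * MM ^ k"
proof -
  have "tf a * tf MM ^ k' = tf a' * tf MM ^ k"
    using assms by (simp only: frac_eq_eq[OF tfMM_nz tfMM_nz])
  hence "tf (a * MM ^ k') = tf (a' * MM ^ k)" by (simp only: to_fract_mult tf_power)
  thus ?thesis by (simp only: to_fract_eq_iff)
qed

lemma Ev_rep:
  assumes f: "f = tf a / tf MM ^ k" and nz: "evR MM x b \<noteq> 0"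
  shows "Ev x b f = evR a x b / evR MM x b ^ k"
  unfolding Ev_def
proof (rule the_equality)
  show "\<exists>a' k'. f = tf a' / tf MM ^ k' \<and> evR a x b / evR MM x b ^ k = evR a' x b / evR MM x b ^ k'"
    by (rule exI[of _ a], rule exI[of _ k]) (simp only: f refl conj_absorb simp_thms)
next
  fix v assume "\<exists>a' k'. f = tf a' / tf MM ^ k' \<and> v = evR a' x b / evR MM x b ^ k'"
  then obtain a' k' where f': "f = tf a' / tf MM ^ k'" and v: "v = evR a' x b / evR MM x b ^ k'" by blast
  have "tf a / tf MM ^ k = tf a' / tf MM ^ k'" using f f' by simp
  hence "a * MM ^ k' = a' * MM ^ k" by (rule rep_eq)
  hence "evR (a * MM ^ k') x b = evR (a' * MM ^ k) x b" by (rule arg_cong)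
  hence "evR a x b * evR MM x b ^ k' = evR a' x b * evR MM x b ^ k" by (simp only: evR_hom)
  thus "v = evR a x b / evR MM x b ^ k" unfolding v using nz by (simp add: frac_eq_eq)
qed

lemma Ev_tf: "evR MM x b \<noteq> 0 \<Longrightarrow> Ev x b (tf a) = evR a x b"
  using Ev_rep[of "tf a" a 0] by simp

lemma Ev_add: assumes "f \<in> Lset" "g \<in> Lset" "evR MM x b \<noteq> 0" shows "Ev x b (f + g) = Ev x b f + Ev x b g"
proof -
  obtain a k where f: "f = tf a / tf MM ^ k" using assms(1) by (rule LsetE)
  obtain c l where g: "g = tf c / tf MM ^ l" using assms(2) by (rule LsetE)
  have fg: "f + g = tf (a * MM ^ l + c * MM ^ k) / tf MM ^ (k + l)"
    unfolding f g using MM_nz by (simp add: field_simps power_add)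
  show ?thesis unfolding Ev_rep[OF fg assms(3)] Ev_rep[OF f assms(3)] Ev_rep[OF g assms(3)]
    using assms(3) by (simp add: evR_hom field_simps power_add)
qed

lemma Ev_mult: assumes "f \<in> Lset" "g \<in> Lset" "evR MM x b \<noteq> 0" shows "Ev x b (f * g) = Ev x b f * Ev x b g"
proof -
  obtain a k where f: "f = tf a / tf MM ^ k" using assms(1) by (rule LsetE)
  obtain c l where g: "g = tf c / tf MM ^ l" using assms(2) by (rule LsetE)
  have fg: "f * g = tf (a * c) / tf MM ^ (k + l)"
    unfolding f g using MM_nz by (simp add: field_simps power_add)
  show ?thesis unfolding Ev_rep[OF fg assms(3)] Ev_rep[OF f assms(3)] Ev_rep[OF g assms(3)]
    using assms(3) by (simp add: evR_hom field_simps power_add)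
qed

lemma Ev_pow: assumes "f \<in> Lset" "evR MM x b \<noteq> 0" shows "Ev x b (f ^ n) = Ev x b f ^ n"
proof (induction n)
  case 0 show ?case using Ev_tf[OF assms(2), of 1] by (simp add: evR_hom)
next
  case (Suc n) thus ?case using Ev_mult[OF assms(1) L_pow[OF assms(1)] assms(2)] by simp
qed

lemma prime_V: "prime_elem V0" "prime_elem V1" "prime_elem V2" "prime_elem V3" "prime_elem Bv"
  unfolding V0_def V1_def V2_def V3_def Bv_def
  by (simp_all add: prime_elem_const_poly_iff prime_elem_linear_poly)

definition nmp :: "R \<Rightarrow> bool" where "nmp p \<longleftrightarrow> prime_elem p \<and> \<not> p dvd MM"

definition divL :: "R \<Rightarrow> R fract \<Rightarrow> bool" where "divL p f \<longleftrightarrow> (\<exists>g\<in>Lset. f = tf p * g)"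

lemma divL_rep:
  assumes p: "nmp p" and f: "f = tf a / tf MM ^ k"
  shows "divL p f \<longleftrightarrow> p dvd a"
proof
  assume "divL p f"
  then obtain g where g: "g \<in> Lset" "f = tf p * g" unfolding divL_def by blast
  obtain b l where gb: "g = tf b / tf MM ^ l" using g(1) by (rule LsetE)
  have "tf a / tf MM ^ k = tf (p * b) / tf MM ^ l" using f g(2) gb by simp
  hence "a * MM ^ l = p * b * MM ^ k" by (rule rep_eq)
  hence "p dvd a * MM ^ l" by (metis dvd_triv_left mult.assoc)
  moreover have "\<not> p dvd MM ^ l"
    using p unfolding nmp_def by (metis prime_elem_dvd_power)
  ultimately show "p dvd a" using p unfolding nmp_def by (simp add: prime_elem_dvd_mult_iff)
next
  assume "p dvd a"
  then obtain q where q: "a = p * q" by (auto elim: dvdE)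
  have "f = tf p * (tf q / tf MM ^ k)" using f q by simp
  moreover have "tf q / tf MM ^ k \<in> Lset" by (rule LsetI) simp
  ultimately show "divL p f" unfolding divL_def by blast
qed

lemma divL_tf: "nmp p \<Longrightarrow> divL p (tf a) \<longleftrightarrow> p dvd a"
  using divL_rep[of p "tf a" a 0] by simp

lemma divL_mult:
  assumes p: "nmp p" and f: "f \<in> Lset" and g: "g \<in> Lset" and d: "divL p (f * g)"
  shows "divL p f \<or> divL p g"
proof -
  obtain a k where fa: "f = tf a / tf MM ^ k" using f by (rule LsetE)
  obtain b l where gb: "g = tf b / tf MM ^ l" using g by (rule LsetE)
  have fg: "f * g = tf (a * b) / tf MM ^ (k + l)" unfolding fa gb by (simp add: power_add)
  have "p dvd a * b" using d divL_rep[OF p fg] by simp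
  hence "p dvd a \<or> p dvd b" using p unfolding nmp_def by (simp add: prime_elem_dvd_mult_iff)
  thus ?thesis using divL_rep[OF p fa] divL_rep[OF p gb] by blast
qed

lemma divL_add: "divL p f \<Longrightarrow> divL p g \<Longrightarrow> divL p (f + g)"
  unfolding divL_def by (auto intro!: bexI[of _ "_ + _"] L_add simp: distrib_left)

lemma divL_diff: "divL p f \<Longrightarrow> divL p g \<Longrightarrow> divL p (f - g)"
  unfolding divL_def by (auto intro!: bexI[of _ "_ - _"] L_diff simp: right_diff_distrib)

lemma divL_multR: "divL p f \<Longrightarrow> h \<in> Lset \<Longrightarrow> divL p (f * h)"
  unfolding divL_def by (auto intro!: bexI[of _ "_ * h"] L_mult simp: mult.assoc)

lemma divL_multL: "divL p f \<Longrightarrow> h \<in> Lset \<Longrightarrow> divL p (h * f)"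
  using divL_multR[of p f h] by (simp add: mult.commute)

lemma not_divL_1: "nmp p \<Longrightarrow> \<not> divL p 1"
  using divL_tf[of p 1] by (simp add: nmp_def prime_elem_not_unit)

lemma divL_pow:
  assumes p: "nmp p" and f: "f \<in> Lset" and d: "divL p (f ^ n)"
  shows "divL p f"
  using d
proof (induction n)
  case 0 thus ?case using not_divL_1[OF p] by simp
next
  case (Suc n)
  have "divL p f \<or> divL p (f ^ n)" using divL_mult[OF p f L_pow[OF f], of n] Suc.prems by simp
  thus ?case using Suc.IH by blast
qed

lemma not_divL_V: assumes "nmp p" shows "\<not> divL p (tf V0)" "\<not> divL p (tf V1)" "\<not> divL p (tf V2)" "\<not> divL p (tf V3)"
  using assms divL_tf[OF assms] V_dvd_MM unfolding nmp_def by (meson dvd_trans)+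

definition ones :: "complex^4" where "ones = (\<chi> i. 1)"

lemma evR_MM_ones: "evR MM ones b = 1" by (simp add: evR_MM ones_def)

lemma divL_B_contra:
  assumes p: "nmp p" and dB: "divL p (tf Bv)" and df: "divL p f" and ev: "Ev ones 0 f = 1"
  shows False
proof -
  have "p dvd Bv" using dB divL_tf[OF p] by simp
  then obtain q where q: "Bv = p * q" by (auto elim: dvdE)
  have "is_unit p \<or> is_unit q" using irreducibleD[OF prime_elem_imp_irreducible[OF prime_V(5)] q] .
  hence "is_unit q" using p unfolding nmp_def by (auto simp: prime_elem_not_unit)
  then obtain w where w: "1 = q * w" by (auto elim: dvdE)
  have "evR q ones 0 * evR w ones 0 = 1" using arg_cong[OF w, of "\<lambda>z. evR z ones 0"] by (simp add: evR_hom)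
  hence qnz: "evR q ones 0 \<noteq> 0" by auto
  have "evR p ones 0 * evR q ones 0 = 0" using arg_cong[OF q, of "\<lambda>z. evR z ones 0"] by (simp add: evR_hom evR_vars)
  hence pz: "evR p ones 0 = 0" using qnz by simp
  obtain g where g: "g \<in> Lset" "f = tf p * g" using df unfolding divL_def by blast
  have "Ev ones 0 f = Ev ones 0 (tf p) * Ev ones 0 g" using g Ev_mult[OF L_tf g(1)] evR_MM_ones by simp
  also have "\<dots> = 0" using Ev_tf[of ones 0 p] evR_MM_ones pz by simp
  finally show False using ev by simp
qed

lemma strip_prime:
  fixes x P :: R
  assumes "x \<noteq> 0" "prime_elem P"
  obtains k y where "x = P ^ k * y" "\<not> P dvd y"
  using multiplicity_decompose'[of x P] assms prime_elem_not_unit by blast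

lemma dvd_of_assoc_prime:
  fixes q V :: R
  assumes "prime_elem q" "prime_elem V" "q dvd V" shows "V dvd q"
proof -
  obtain u where u: "V = q * u" using assms(3) by (auto elim: dvdE)
  have "is_unit q \<or> is_unit u" using irreducibleD[OF prime_elem_imp_irreducible[OF assms(2)] u] .
  hence "is_unit u" using assms(1) by (auto simp: prime_elem_not_unit)
  then obtain u' where "1 = u * u'" by (auto elim: dvdE)
  hence "q = V * u'" using u by (metis mult.assoc mult_1_right)
  thus ?thesis by simp
qed

lemma decomp:
  assumes a: "a \<noteq> 0"
  obtains w a' r where "a = w * a'" "w dvd MM ^ r" "\<And>q. prime_elem q \<Longrightarrow> q dvd a' \<Longrightarrow> \<not> q dvd MM"
proof -
  obtain k0 a0 where a0: "a = V0 ^ k0 * a0" "\<not> V0 dvd a0" using strip_prime[OF a prime_V(1)] .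
  have a0nz: "a0 \<noteq> 0" using a a0 by auto
  obtain k1 a1 where a1: "a0 = V1 ^ k1 * a1" "\<not> V1 dvd a1" using strip_prime[OF a0nz prime_V(2)] .
  have a1nz: "a1 \<noteq> 0" using a0nz a1 by auto
  obtain k2 a2 where a2: "a1 = V2 ^ k2 * a2" "\<not> V2 dvd a2" using strip_prime[OF a1nz prime_V(3)] .
  have a2nz: "a2 \<noteq> 0" using a1nz a2 by auto
  obtain k3 a3 where a3: "a2 = V3 ^ k3 * a3" "\<not> V3 dvd a3" using strip_prime[OF a2nz prime_V(4)] .
  have d3: "a3 dvd a2" "a3 dvd a1" "a3 dvd a0" using a1 a2 a3 by (auto intro: dvd_mult_right)
  have nV: "\<not> V0 dvd a3" "\<not> V1 dvd a3" "\<not> V2 dvd a3" "\<not> V3 dvd a3"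
    using a0(2) a1(2) a2(2) a3(2) d3 by (meson dvd_trans)+
  define w where "w = V0 ^ k0 * V1 ^ k1 * V2 ^ k2 * V3 ^ k3"
  have aw: "a = w * a3" using a0 a1 a2 a3 by (simp add: w_def mult.assoc)
  have "w dvd MM ^ k0 * MM ^ k1 * MM ^ k2 * MM ^ k3"
    unfolding w_def by (intro mult_dvd_mono dvd_power_same V_dvd_MM)
  hence wd: "w dvd MM ^ (k0 + k1 + k2 + k3)" by (simp add: power_add)
  have "\<not> q dvd MM" if q: "prime_elem q" "q dvd a3" for q
  proof
    assume "q dvd MM"
    hence "q dvd V0 \<or> q dvd V1 \<or> q dvd V2 \<or> q dvd V3"
      using q(1) unfolding MM_def by (simp add: prime_elem_dvd_mult_iff)
    thus False using dvd_of_assoc_prime[OF q(1) prime_V(1)] dvd_of_assoc_prime[OF q(1) prime_V(2)]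
      dvd_of_assoc_prime[OF q(1) prime_V(3)] dvd_of_assoc_prime[OF q(1) prime_V(4)] q(2) nV
      by (meson dvd_trans)
  qed
  thus ?thesis using that[OF aw wd] by blast
qed

lemma coprime_noprime:
  fixes a z :: R
  assumes a: "a \<noteq> 0" and h: "\<And>q. prime_elem q \<Longrightarrow> q dvd a \<Longrightarrow> q dvd z \<Longrightarrow> False"
  shows "coprime a z"
  unfolding coprime_def
proof (intro allI impI)
  fix c assume c: "c dvd a" "c dvd z"
  show "is_unit c"
  proof (rule ccontr)
    assume nu: "\<not> is_unit c"
    have "c \<noteq> 0" using c a by auto
    then obtain q where q: "q dvd c" "prime q" using prime_divisor_exists nu by blast
    show False using h[of q] q c prime_imp_prime_elem by (meson dvd_trans)
  qed
qed

lemma GL: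
  assumes f: "f \<in> Lset" and g: "g \<in> Lset" and h: "h \<in> Lset" and Q: "Q \<in> Lset"
    and fnz: "f \<noteq> 0" and eq: "g * h = f * Q"
    and cop: "\<And>p. nmp p \<Longrightarrow> divL p f \<Longrightarrow> divL p h \<Longrightarrow> False"
  shows "\<exists>q\<in>Lset. g = f * q"
proof -
  obtain a i where fa: "f = tf a / tf MM ^ i" using f by (rule LsetE)
  obtain b j where gb: "g = tf b / tf MM ^ j" using g by (rule LsetE)
  obtain d k where hd: "h = tf d / tf MM ^ k" using h by (rule LsetE)
  obtain e l where Qe: "Q = tf e / tf MM ^ l" using Q by (rule LsetE)
  have anz: "a \<noteq> 0" using fnz fa by auto
  have "tf (b * d) / tf MM ^ (j + k) = tf (a * e) / tf MM ^ (i + l)"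
    using eq unfolding fa gb hd Qe by (simp add: power_add)
  hence E: "b * d * MM ^ (i + l) = a * e * MM ^ (j + k)" by (rule rep_eq)
  obtain w a' r where dec: "a = w * a'" "w dvd MM ^ r" "\<And>q. prime_elem q \<Longrightarrow> q dvd a' \<Longrightarrow> \<not> q dvd MM"
    using decomp[OF anz] by blast
  have a'nz: "a' \<noteq> 0" using anz dec(1) by auto
  have "b * (d * MM ^ (i + l)) = a' * (w * e * MM ^ (j + k))"
    using E unfolding dec(1) by (simp add: ac_simps)
  hence "a' dvd b * (d * MM ^ (i + l))" by (rule dvdI)
  moreover have "coprime a' (d * MM ^ (i + l))"
  proof (rule coprime_noprime[OF a'nz])
    fix q assume q: "prime_elem q" "q dvd a'" "q dvd d * MM ^ (i + l)"
    have nq: "\<not> q dvd MM" using dec(3) q by blast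
    hence "\<not> q dvd MM ^ (i + l)" using q(1) by (metis prime_elem_dvd_power)
    hence qd: "q dvd d" using q by (simp add: prime_elem_dvd_mult_iff)
    have nmq: "nmp q" using q(1) nq by (simp add: nmp_def)
    have "q dvd a" using q(2) dec(1) by simp
    hence "divL q f" using divL_rep[OF nmq fa] by simp
    moreover have "divL q h" using divL_rep[OF nmq hd] qd by simp
    ultimately show False using cop[OF nmq] by blast
  qed
  ultimately have "a' dvd b" using coprime_dvd_mult_left_iff by blast
  then obtain q0 where q0: "b = a' * q0" by (auto elim: dvdE)
  have wnz: "w \<noteq> 0" using anz dec(1) by auto
  define q where "q = tf q0 * tf (MM ^ i) * inverse (tf w) * inverse (tf MM) ^ j"
  have "q \<in> Lset" unfolding q_def
    by (intro L_mult L_tf L_inv_div[OF dec(2)] L_pow L_invMM)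
  moreover have "g = f * q"
  proof -
    have i1: "tf w * inverse (tf w) = 1" using wnz by simp
    have i2: "tf (MM ^ i) * inverse (tf MM ^ i) = 1" using MM_nz by simp
    have "f * q = (tf w * inverse (tf w)) * (tf (MM ^ i) * inverse (tf MM ^ i)) * (tf a' * tf q0 * inverse (tf MM) ^ j)"
      unfolding q_def fa dec(1) by (simp add: divide_inverse power_inverse ac_simps)
    also have "\<dots> = tf b / tf MM ^ j" unfolding i1 i2 q0 by (simp add: divide_inverse power_inverse)
    finally show ?thesis using gb by simp
  qed
  ultimately show ?thesis by blast
qed

fun sq :: "nat \<Rightarrow> nat \<Rightarrow> R fract" where
  "sq c 0 = tf V0"
| "sq c (Suc 0) = tf V1"
| "sq c (Suc (Suc 0)) = tf V2"
| "sq c (Suc (Suc (Suc 0))) = tf V3"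
| "sq c (Suc (Suc (Suc (Suc n)))) =
     (sq c (Suc n) * sq c (Suc (Suc (Suc n))) + tf Bv * sq c (Suc (Suc n)) ^ c) / sq c n"

lemma sq_step: "sq c (n + 4) = (sq c (n+1) * sq c (n+3) + tf Bv * sq c (n+2) ^ c) / sq c n"
proof -
  have "n + 4 = Suc (Suc (Suc (Suc n)))" "n + 3 = Suc (Suc (Suc n))" "n + 2 = Suc (Suc n)" "n + 1 = Suc n" by simp_all
  thus ?thesis by (simp only: sq.simps)
qed

lemma sq_rel: "sq c n \<noteq> 0 \<Longrightarrow> sq c (n + 4) * sq c n = sq c (n+1) * sq c (n+3) + tf Bv * sq c (n+2) ^ c"
  using sq_step[of c n] by simp

lemma sq_init: "sq c 0 = tf V0" "sq c 1 = tf V1" "sq c 2 = tf V2" "sq c 3 = tf V3"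
  by (simp_all add: numeral_2_eq_2 numeral_3_eq_3)

declare sq.simps [simp del]

lemma key_identity:
  fixes a b d e f g h z B :: "'a::comm_ring_1"
  assumes R1: "h * d = e * g + B * f^c" and R2: "g * b = d * f + B * e^c"
    and R3: "f * a = b * e + B * d^c" and R4: "e * z = a * d + B * b^c"
  defines "T \<equiv> B * e^(c-1) * (\<Sum>i<c. (f*d)^(c - Suc i) * (d*f + B*e^c)^i)"
  shows "(f * h + B * g^c) * (d * b^c * a) =
         e * (a * (f * g * b^c + B * d * T) + B * f^c * b^(c+1) + B * f^c * d^c * z)"
proof -
  have X: "(g * b)^c = (f * d)^c + e * T"
  proof (cases c)
    case 0 thus ?thesis by (simp add: T_def)
  next
    case (Suc c')
    have "(d*f + B*e^c)^c - (f*d)^c = ((d*f + B*e^c) - f*d) * (\<Sum>i<c. (f*d)^(c - Suc i) * (d*f + B*e^c)^i)"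
      by (rule power_diff_sumr2)
    also have "(d*f + B*e^c) - f*d = e * (B * e^(c-1))" using Suc by (simp add: algebra_simps)
    finally have "(d*f + B*e^c)^c = (f*d)^c + e * T" unfolding T_def by (simp add: algebra_simps)
    thus ?thesis using R2 by simp
  qed
  have "(f * h + B * g^c) * (d * b^c * a) = f*b^c*a*(h*d) + B*d*a*(g*b)^c"
    by (simp add: algebra_simps power_mult_distrib)
  also have "\<dots> = f*b^c*a*(e*g + B*f^c) + B*d*a*((f*d)^c + e*T)" unfolding R1 X ..
  also have "\<dots> = e*(a*(f*g*b^c + B*d*T)) + B*f^c*(b^c*(f*a) + a*d*d^c)"
    by (simp add: algebra_simps power_mult_distrib)
  also have "\<dots> = e*(a*(f*g*b^c + B*d*T)) + B*f^c*(b^c*(b*e + B*d^c) + a*d*d^c)" unfolding R3 ..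
  also have "\<dots> = e*(a*(f*g*b^c + B*d*T)) + B*f^c*(e*b*b^c + d^c*(a*d + B*b^c))"
    by (simp add: algebra_simps)
  also have "\<dots> = e*(a*(f*g*b^c + B*d*T)) + B*f^c*(e*b*b^c + d^c*(e*z))" unfolding R4 ..
  also have "\<dots> = e * (a * (f * g * b^c + B * d * T) + B * f^c * b^(c+1) + B * f^c * d^c * z)"
    by (simp add: algebra_simps)
  finally show ?thesis .
qed

definition HH :: "nat \<Rightarrow> nat \<Rightarrow> bool" where
  "HH c N \<longleftrightarrow> (\<forall>j\<le>N. sq c j \<in> Lset \<and> Ev ones 0 (sq c j) = 1)"

lemma Ev0_zero: "Ev ones 0 0 = 0"
  using Ev_tf[of ones 0 0] evR_MM_ones by (simp add: evR_hom)

lemma HH_L: "HH c N \<Longrightarrow> j \<le> N \<Longrightarrow> sq c j \<in> Lset"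
  and HH_E: "HH c N \<Longrightarrow> j \<le> N \<Longrightarrow> Ev ones 0 (sq c j) = 1"
  and HH_nz: "HH c N \<Longrightarrow> j \<le> N \<Longrightarrow> sq c j \<noteq> 0"
  unfolding HH_def using Ev0_zero by force+

lemma L_B: "tf Bv \<in> Lset" by (rule L_tf)

lemma var_nodiv: assumes p: "nmp p" and n: "n < 4" shows "\<not> divL p (sq c n)"
proof -
  have "n = 0 \<or> n = 1 \<or> n = 2 \<or> n = 3" using n by auto
  thus ?thesis using sq_init[of c] not_divL_V[OF p] by auto
qed

lemma cop1:
  assumes H: "HH c N" and p: "nmp p"
  shows "n + 1 \<le> N \<Longrightarrow> divL p (sq c n) \<Longrightarrow> divL p (sq c (n+1)) \<Longrightarrow> False"
proof (induction n)
  case 0 thus ?case using var_nodiv[OF p, of 0 c] by simp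
next
  case (Suc n)
  show ?case
  proof (cases "Suc n < 3")
    case True thus ?thesis using var_nodiv[OF p, of "Suc n" c] Suc.prems by simp
  next
    case False
    then obtain m where m: "Suc n = m + 3" by (metis add.commute le_add_diff_inverse not_less)
    have nz: "sq c m \<noteq> 0" using HH_nz[OF H, of m] Suc.prems m by simp
    have rel: "sq c (m + 4) * sq c m = sq c (m+1) * sq c (m+3) + tf Bv * sq c (m+2) ^ c"
      by (rule sq_rel[OF nz])
    have Lj: "sq c j \<in> Lset" if "j \<le> m + 4" for j using HH_L[OF H, of j] that Suc.prems m by simp
    have e4: "Suc n + 1 = m + 4" using m by simp
    have d4: "divL p (sq c (m + 4))" using Suc.prems(3) unfolding e4 .
    have d3: "divL p (sq c (m + 3))" using Suc.prems(2) unfolding m .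
    have "divL p (sq c (m + 4) * sq c m - sq c (m+1) * sq c (m+3))"
      by (rule divL_diff[OF divL_multR[OF d4 Lj] divL_multL[OF d3 Lj]]) simp_all
    hence "divL p (tf Bv * sq c (m+2) ^ c)" using rel by simp
    moreover have Lm2: "sq c (m+2) \<in> Lset" by (rule Lj) simp
    ultimately have "divL p (tf Bv) \<or> divL p (sq c (m+2) ^ c)" by (intro divL_mult[OF p L_B L_pow[OF Lm2]])
    thus False
    proof
      assume "divL p (tf Bv)"
      thus False using divL_B_contra[OF p _ d3 HH_E[OF H]] Suc.prems m by simp
    next
      assume "divL p (sq c (m+2) ^ c)"
      hence "divL p (sq c (m+2))" by (rule divL_pow[OF p Lm2])
      thus False using Suc.IH[of] Suc.prems d3 m by (simp add: numeral_eq_Suc)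
    qed
  qed
qed

lemma cop2:
  assumes H: "HH c N" and p: "nmp p" and c: "c \<ge> 1"
    and n: "n + 2 \<le> N" and d0: "divL p (sq c n)" and d2: "divL p (sq c (n+2))"
  shows False
proof (cases "n < 2")
  case True thus ?thesis using var_nodiv[OF p, of n c] d0 by simp
next
  case False
  then obtain m where m: "n = m + 2" by (metis add.commute le_add_diff_inverse not_less)
  have Lj: "sq c j \<in> Lset" if "j \<le> m + 4" for j using HH_L[OF H, of j] that n m by simp
  have nz: "sq c m \<noteq> 0" using HH_nz[OF H, of m] n m by simp
  have rel: "sq c (m + 4) * sq c m = sq c (m+1) * sq c (m+3) + tf Bv * sq c (m+2) ^ c"
    by (rule sq_rel[OF nz])
  have e: "n + 2 = m + 4" using m by simp
  have d4: "divL p (sq c (m + 4))" using d2 unfolding e .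
  have dm2: "divL p (sq c (m + 2))" using d0 m by simp
  have cc: "sq c (m+2) ^ c = sq c (m+2) * sq c (m+2) ^ (c - 1)" using c by (cases c) auto
  have Lp: "sq c (m+2) ^ (c - 1) \<in> Lset" by (intro L_pow Lj) simp
  have "divL p (tf Bv * sq c (m+2) ^ c)"
    unfolding cc by (rule divL_multL[OF divL_multR[OF dm2 Lp] L_B])
  moreover have Lm: "sq c m \<in> Lset" by (rule Lj) simp
  ultimately have "divL p (sq c (m + 4) * sq c m - tf Bv * sq c (m+2) ^ c)"
    by (intro divL_diff[OF divL_multR[OF d4 Lm]])
  hence "divL p (sq c (m+1) * sq c (m+3))" using rel by simp
  moreover have Lm1: "sq c (m+1) \<in> Lset" by (rule Lj) simp
  moreover have Lm3: "sq c (m+3) \<in> Lset" by (rule Lj) simp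
  ultimately have "divL p (sq c (m+1)) \<or> divL p (sq c (m+3))"
    by (intro divL_mult[OF p Lm1 Lm3])
  thus False
  proof
    assume "divL p (sq c (m+1))"
    thus False using cop1[OF H p, of "m+1"] dm2 n m by (simp add: numeral_eq_Suc)
  next
    assume "divL p (sq c (m+3))"
    thus False using cop1[OF H p, of "m+2"] dm2 n m by (simp add: numeral_eq_Suc)
  qed
qed

lemma cop3:
  assumes H: "HH c N" and p: "nmp p"
    and n: "n + 3 \<le> N" and d0: "divL p (sq c n)" and d3: "divL p (sq c (n+3))"
  shows False
proof (cases "n < 1")
  case True thus ?thesis using var_nodiv[OF p, of n c] d0 by simp
next
  case False
  then obtain m where m: "n = m + 1" by (metis add.commute le_add_diff_inverse not_less)
  have Lj: "sq c j \<in> Lset" if "j \<le> m + 4" for j using HH_L[OF H, of j] that n m by simp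
  have nz: "sq c m \<noteq> 0" using HH_nz[OF H, of m] n m by simp
  have rel: "sq c (m + 4) * sq c m = sq c (m+1) * sq c (m+3) + tf Bv * sq c (m+2) ^ c"
    by (rule sq_rel[OF nz])
  have e: "n + 3 = m + 4" using m by simp
  have d4: "divL p (sq c (m + 4))" using d3 unfolding e .
  have dm1: "divL p (sq c (m + 1))" using d0 m by simp
  have "divL p (sq c (m + 4) * sq c m - sq c (m+1) * sq c (m+3))"
    by (rule divL_diff[OF divL_multR[OF d4 Lj] divL_multR[OF dm1 Lj]]) simp_all
  hence "divL p (tf Bv * sq c (m+2) ^ c)" using rel by simp
  moreover have Lm2: "sq c (m+2) \<in> Lset" by (rule Lj) simp
  ultimately have "divL p (tf Bv) \<or> divL p (sq c (m+2) ^ c)" by (intro divL_mult[OF p L_B L_pow[OF Lm2]])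
  thus False
  proof
    assume "divL p (tf Bv)"
    thus False using divL_B_contra[OF p _ dm1 HH_E[OF H]] n m by simp
  next
    assume "divL p (sq c (m+2) ^ c)"
    hence "divL p (sq c (m+2))" by (rule divL_pow[OF p Lm2])
    thus False using cop1[OF H p, of "m+1"] dm1 n m by (simp add: numeral_eq_Suc)
  qed
qed

lemma main_alg: "sq c n \<in> Lset \<and> Ev ones 0 (sq c n) = 1"
proof (induction n rule: less_induct)
  case (less n)
  have E1: "evR MM ones 0 \<noteq> 0" by (simp add: evR_MM_ones)
  show ?case
  proof (cases "n < 4")
    case True
    hence "n = 0 \<or> n = 1 \<or> n = 2 \<or> n = 3" by auto
    thus ?thesis using sq_init[of c] L_tf Ev_tf[OF E1] by (auto simp: evR_vars ones_def)
  next
    case False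
    then obtain t where t: "n = t + 4" by (metis add.commute le_add_diff_inverse not_less)
    have H: "HH c (t + 3)" unfolding HH_def using less.IH t by auto
    have Lj: "sq c j \<in> Lset" if "j \<le> t + 3" for j using HH_L[OF H that] .
    have nzt: "sq c t \<noteq> 0" using HH_nz[OF H, of t] by simp
    define N where "N = sq c (t+1) * sq c (t+3) + tf Bv * sq c (t+2) ^ c"
    have LN: "N \<in> Lset" unfolding N_def by (intro L_add L_mult L_B L_pow Lj) simp_all
    have st: "sq c n = N / sq c t" unfolding t N_def by (rule sq_step)
    have "sq c n \<in> Lset"
    proof (cases "t < 4")
      case True
      hence "t = 0 \<or> t = 1 \<or> t = 2 \<or> t = 3" by auto
      hence "inverse (sq c t) \<in> Lset" using sq_init[of c] L_invV by auto
      thus ?thesis unfolding st divide_inverse by (rule L_mult[OF LN])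
    next
      case False
      then obtain m where m: "t = m + 4" by (metis add.commute le_add_diff_inverse not_less)
      let ?a = "sq c (m+1)" and ?b = "sq c (m+2)" and ?d = "sq c (m+3)" and ?e = "sq c (m+4)"
        and ?f = "sq c (m+5)" and ?g = "sq c (m+6)" and ?h = "sq c (m+7)" and ?z = "sq c m"
      have nzj: "sq c j \<noteq> 0" if "j \<le> m + 7" for j using HH_nz[OF H, of j] that m by simp
      have idx: "m+3+4 = m+7" "m+3+1 = m+4" "m+3+3 = m+6" "m+3+2 = m+5"
        "m+2+4 = m+6" "m+2+1 = m+3" "m+2+3 = m+5" "m+2+2 = m+4"
        "m+1+4 = m+5" "m+1+1 = m+2" "m+1+3 = m+4" "m+1+2 = m+3" by simp_all
      have R1: "?h * ?d = ?e * ?g + tf Bv * ?f ^ c"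
        using sq_rel[OF nzj[of "m+3"]] unfolding idx by simp
      have R2: "?g * ?b = ?d * ?f + tf Bv * ?e ^ c"
        using sq_rel[OF nzj[of "m+2"]] unfolding idx by simp
      have R3: "?f * ?a = ?b * ?e + tf Bv * ?d ^ c"
        using sq_rel[OF nzj[of "m+1"]] unfolding idx by simp
      have R4: "?e * ?z = ?a * ?d + tf Bv * ?b ^ c"
        using sq_rel[OF nzj[of "m"]] by simp
      define T where "T = tf Bv * ?e^(c-1) * (\<Sum>i<c. (?f*?d)^(c - Suc i) * (?d*?f + tf Bv*?e^c)^i)"
      define Q where "Q = ?a * (?f * ?g * ?b^c + tf Bv * ?d * T) + tf Bv * ?f^c * ?b^(c+1) + tf Bv * ?f^c * ?d^c * ?z"
      have KI: "(?f * ?h + tf Bv * ?g^c) * (?d * ?b^c * ?a) = ?e * Q"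
        unfolding Q_def T_def by (rule key_identity[OF R1 R2 R3 R4])
      have LmJ: "sq c (m + k) \<in> Lset" if "k \<le> 7" for k using Lj[of "m+k"] that m by simp
      have La: "?a \<in> Lset" and Lb: "?b \<in> Lset" and Ld: "?d \<in> Lset" and Le: "?e \<in> Lset"
        and Lf: "?f \<in> Lset" and Lg: "?g \<in> Lset" and Lh: "?h \<in> Lset" and Lz: "?z \<in> Lset"
        using LmJ[of 1] LmJ[of 2] LmJ[of 3] LmJ[of 4] LmJ[of 5] LmJ[of 6] LmJ[of 7] LmJ[of 0] by simp_all
      have LT: "T \<in> Lset" unfolding T_def by (intro L_mult L_pow L_B Le L_sum L_add Lf Ld)
      have LQ: "Q \<in> Lset" unfolding Q_def by (intro L_mult L_add L_pow L_B La Lb Ld Le Lf Lg Lz LT)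
      have LD: "?d * ?b^c * ?a \<in> Lset" by (intro L_mult L_pow La Lb Ld)
      have Nm: "N = ?f * ?h + tf Bv * ?g^c" unfolding N_def m by (simp add: ac_simps)
      have "\<exists>q\<in>Lset. N = ?e * q"
      proof (rule GL[OF Le LN LD LQ])
        show "?e \<noteq> 0" using nzj[of "m+4"] by simp
        show "N * (?d * ?b^c * ?a) = ?e * Q" unfolding Nm by (rule KI)
      next
        fix p assume p: "nmp p" and de: "divL p ?e" and dD: "divL p (?d * ?b^c * ?a)"
        have "divL p (?d * ?b^c) \<or> divL p ?a" by (rule divL_mult[OF p _ La dD]) (intro L_mult L_pow Lb Ld)
        hence "divL p ?d \<or> divL p (?b^c) \<or> divL p ?a" using divL_mult[OF p Ld L_pow[OF Lb]] by blast
        thus False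
        proof (elim disjE)
          assume "divL p ?d"
          thus False using cop1[OF H p, of "m+3"] de m by (simp add: ac_simps)
        next
          assume bc: "divL p (?b^c)"
          hence db: "divL p ?b" by (rule divL_pow[OF p Lb])
          have "c \<ge> 1" proof (rule ccontr)
            assume "\<not> c \<ge> 1" hence "c = 0" by simp
            thus False using bc not_divL_1[OF p] by simp
          qed
          hence c1: "c \<ge> 1" .
          have e: "m+2+2 = m+4" by simp
          have d2': "divL p (sq c (m + 2 + 2))" unfolding e by (rule de)
          have le: "m + 2 + 2 \<le> t + 3" using m by simp
          show False by (rule cop2[OF H p c1 le db d2'])
        next
          assume "divL p ?a"
          thus False using cop3[OF H p, of "m+1"] de m by (simp add: ac_simps)
        qed
      qed
      then obtain q where q: "q \<in> Lset" "N = ?e * q" by blast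
      have "sq c n = q" unfolding st q(2) m using nzj[of "m+4"] by (simp add: ac_simps)
      thus ?thesis using q(1) by simp
    qed
    moreover have "Ev ones 0 (sq c n) = 1"
    proof -
      have rel: "sq c n * sq c t = N" using st nzt by simp
      have "Ev ones 0 (sq c n) * Ev ones 0 (sq c t) = Ev ones 0 N"
        using Ev_mult[OF calculation Lj[of t] E1] rel by simp
      also have "Ev ones 0 N = 1"
        unfolding N_def using Ev_add Ev_mult Ev_pow HH_E[OF H] Lj E1 Ev_tf[OF E1, of Bv]
        by (simp add: Ev_add[OF L_mult[OF Lj Lj] L_mult[OF L_B L_pow[OF Lj]] E1]
            Ev_mult[OF Lj Lj E1] Ev_mult[OF L_B L_pow[OF Lj] E1] Ev_pow[OF Lj E1] evR_vars HH_E[OF H])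
      finally show ?thesis using HH_E[OF H, of t] by simp
    qed
    ultimately show ?thesis by simp
  qed
qed

lemma evR_MM_nz: "\<forall>i. u$i \<noteq> 0 \<Longrightarrow> evR MM u b \<noteq> 0"
  by (simp add: evR_MM)

lemma sq_nz: "sq c n \<noteq> 0"
  using main_alg[of c n] Ev0_zero by auto

lemma sq_L: "sq c n \<in> Lset" using main_alg[of c n] by simp

lemma transfer:
  assumes tor: "\<forall>i. u$i \<noteq> 0"
  shows "(\<forall>j<n. xs c \<beta> u j \<noteq> 0) \<Longrightarrow> xs c \<beta> u n = Ev u \<beta> (sq c n)"
proof (induction n rule: less_induct)
  case (less n)
  have E1: "evR MM u \<beta> \<noteq> 0" by (rule evR_MM_nz[OF tor])
  show ?case
  proof (cases "n < 4")
    case True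
    hence "n = 0 \<or> n = 1 \<or> n = 2 \<or> n = 3" by auto
    thus ?thesis using sq_init[of c] Ev_tf[OF E1] xs_init[of c \<beta> u] by (auto simp: evR_vars)
  next
    case False
    then obtain t where t: "n = t + 4" by (metis add.commute le_add_diff_inverse not_less)
    have IH: "xs c \<beta> u j = Ev u \<beta> (sq c j)" if "j < n" for j
      using less.IH[OF that] less.prems that by auto
    have xt: "xs c \<beta> u t \<noteq> 0" using less.prems t by simp
    have rel: "sq c n * sq c t = sq c (t+1) * sq c (t+3) + tf Bv * sq c (t+2) ^ c"
      unfolding t by (rule sq_rel[OF sq_nz])
    have "Ev u \<beta> (sq c n) * Ev u \<beta> (sq c t) = Ev u \<beta> (sq c (t+1) * sq c (t+3) + tf Bv * sq c (t+2) ^ c)"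
      using Ev_mult[OF sq_L sq_L E1] rel by metis
    also have "\<dots> = Ev u \<beta> (sq c (t+1)) * Ev u \<beta> (sq c (t+3)) + \<beta> * Ev u \<beta> (sq c (t+2)) ^ c"
      by (simp add: Ev_add[OF L_mult[OF sq_L sq_L] L_mult[OF L_B L_pow[OF sq_L]] E1]
            Ev_mult[OF sq_L sq_L E1] Ev_mult[OF L_B L_pow[OF sq_L] E1] Ev_pow[OF sq_L E1]
            Ev_tf[OF E1] evR_vars)
    also have "\<dots> = xs c \<beta> u (t+1) * xs c \<beta> u (t+3) + \<beta> * xs c \<beta> u (t+2) ^ c"
      using IH[of "t+1"] IH[of "t+2"] IH[of "t+3"] t by simp
    finally have "Ev u \<beta> (sq c n) * xs c \<beta> u t = xs c \<beta> u (t+1) * xs c \<beta> u (t+3) + \<beta> * xs c \<beta> u (t+2) ^ c"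
      using IH[of t] t by simp
    hence "Ev u \<beta> (sq c n) = (xs c \<beta> u (t+1) * xs c \<beta> u (t+3) + \<beta> * xs c \<beta> u (t+2) ^ c) / xs c \<beta> u t"
      using xt by (simp add: field_simps)
    thus ?thesis unfolding t xs_rec by simp
  qed
qed

lemma laurent_fun:
  obtains L where "L \<in> laurent" "\<And>u \<beta>. \<forall>i. u$i \<noteq> 0 \<Longrightarrow> L u \<beta> = Ev u \<beta> (sq c n)"
proof -
  obtain a k where ak: "sq c n = tf a / tf MM ^ k" using sq_L[of c n] by (rule LsetE)
  define L where "L = (\<lambda>x b. evR a x b * (inverse (x$0) * inverse (x$1) * inverse (x$2) * inverse (x$3)) ^ k)"
  have "L \<in> laurent" unfolding L_def by (intro laurent.mult lau_evR lau_invmono)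
  moreover have "L u \<beta> = Ev u \<beta> (sq c n)" if "\<forall>i. u$i \<noteq> 0" for u \<beta>
  proof -
    have nz: "u$0 \<noteq> 0" "u$1 \<noteq> 0" "u$2 \<noteq> 0" "u$3 \<noteq> 0" using that by auto
    have "(inverse (u$0) * inverse (u$1) * inverse (u$2) * inverse (u$3)) ^ k = inverse ((u$0 * u$1 * u$2 * u$3) ^ k)"
      by (simp add: power_mult_distrib nz field_simps)
    thus ?thesis unfolding Ev_rep[OF ak evR_MM_nz[OF that]] L_def evR_MM by (simp add: divide_inverse)
  qed
  ultimately show ?thesis using that by blast
qed

definition rv :: "complex^4 \<Rightarrow> complex^4" where
  "rv u = (\<chi> i. if i = 0 then u$3 else if i = 1 then u$2 else if i = 2 then u$1 else u$0)"

definition ri :: "4 \<Rightarrow> 4" where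
  "ri i = (if i = 0 then 3 else if i = 1 then 2 else if i = 2 then 1 else 0)"

lemma rv_nth: "rv u $ i = u $ ri i"
  by (simp add: rv_def ri_def)

lemma rv_comp: "rv u $ 0 = u$3" "rv u $ 1 = u$2" "rv u $ 2 = u$1" "rv u $ 3 = u$0"
  by (simp_all add: rv_def)

lemma rv_rv: "rv (rv u) = u"
  unfolding vec_eq_iff all4 by (simp add: rv_comp)

lemma phiinv_rv: "phiinv c \<beta> u = rv (phi c \<beta> (rv u))"
  unfolding vec_eq_iff all4 by (simp add: rv_comp phi_comp phiinv_def mult.commute)

lemma phiinv_pow: "(phiinv c \<beta> ^^ p) u = rv ((phi c \<beta> ^^ p) (rv u))"
  by (induction p) (simp_all add: rv_rv phiinv_rv)

lemma xseq_neg: "xseq c \<beta> u (- int p) = xs c \<beta> (rv u) (p + 3)"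
proof (cases "p = 0")
  case True thus ?thesis by (simp add: xseq_def xs_init rv_comp)
next
  case False
  hence "xseq c \<beta> u (- int p) = ((phiinv c \<beta> ^^ p) u) $ 0" by (simp add: xseq_def)
  also have "\<dots> = ((phi c \<beta> ^^ p) (rv u)) $ 3" by (simp add: phiinv_pow rv_comp)
  also have "\<dots> = xs c \<beta> (rv u) (p + 3)" by (rule xs_comp)
  finally show ?thesis .
qed

lemma xs_rv: "xs c \<beta> (rv u) j = xseq c \<beta> u (3 - int j)"
proof (cases "j \<le> 3")
  case True
  hence "j = 0 \<or> j = 1 \<or> j = 2 \<or> j = 3" by auto
  thus ?thesis
    by (elim disjE) (simp_all add: xs_def rv_comp xseq_def phi_comp numeral_2_eq_2 numeral_3_eq_3)
next
  case False
  then obtain p where p: "j = p + 3" by (metis add.commute le_add_diff_inverse nat_le_linear)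
  have "3 - int j = - int p" using p by simp
  thus ?thesis using xseq_neg[of c \<beta> u p] p by simp
qed

lemma laurent_rv: "f \<in> laurent \<Longrightarrow> (\<lambda>x b. f (rv x) b) \<in> laurent"
proof (induction rule: laurent.induct)
  case (const k) thus ?case by (rule laurent.const)
next
  case (var i) thus ?case unfolding rv_nth by (rule laurent.var)
next
  case (inv i) thus ?case unfolding rv_nth by (rule laurent.inv)
next
  case par thus ?case by (rule laurent.par)
next
  case (add f g) thus ?case using laurent.add[OF add.IH] by simp
next
  case (mult f g) thus ?case using laurent.mult[OF mult.IH] by simp
qed

theorem part_i:
  "\<forall>n::int. \<exists>L\<in>laurent. \<forall>u \<beta>.
        (\<forall>k::int. min n 0 \<le> k \<and> k \<le> max n 3 \<longrightarrow> xseq c \<beta> u k \<noteq> 0)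
          \<longrightarrow> xseq c \<beta> u n = L u \<beta>"
proof
  fix n :: int
  show "\<exists>L\<in>laurent. \<forall>u \<beta>. (\<forall>k::int. min n 0 \<le> k \<and> k \<le> max n 3 \<longrightarrow> xseq c \<beta> u k \<noteq> 0)
          \<longrightarrow> xseq c \<beta> u n = L u \<beta>"
  proof (cases "n \<ge> 0")
    case True
    then obtain m where m: "n = int m" by (metis nonneg_eq_int)
    obtain L where L: "L \<in> laurent" "\<And>u \<beta>. \<forall>i. u$i \<noteq> 0 \<Longrightarrow> L u \<beta> = Ev u \<beta> (sq c m)"
      using laurent_fun[where c=c and n=m] by blast
    show ?thesis
    proof (rule bexI[OF _ L(1)], intro allI impI)
      fix u \<beta> assume h: "\<forall>k::int. min n 0 \<le> k \<and> k \<le> max n 3 \<longrightarrow> xseq c \<beta> u k \<noteq> 0"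
      have tor: "\<forall>i. u$i \<noteq> 0"
      proof -
        have "xseq c \<beta> u (int j) \<noteq> 0" if "j \<le> 3" for j
        proof -
          have "min n 0 \<le> int j \<and> int j \<le> max n 3" using that m by auto
          thus ?thesis using h by blast
        qed
        hence "xs c \<beta> u j \<noteq> 0" if "j \<le> 3" for j using that by (simp add: xseq_nat)
        hence "xs c \<beta> u 0 \<noteq> 0" "xs c \<beta> u 1 \<noteq> 0" "xs c \<beta> u 2 \<noteq> 0" "xs c \<beta> u 3 \<noteq> 0" by auto
        thus ?thesis unfolding all4 xs_init by blast
      qed
      have "xs c \<beta> u j \<noteq> 0" if "j < m" for j
      proof -
        have "min n 0 \<le> int j \<and> int j \<le> max n 3" using that m by auto
        hence "xseq c \<beta> u (int j) \<noteq> 0" using h by blast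
        thus ?thesis by (simp add: xseq_nat)
      qed
      hence "xs c \<beta> u m = Ev u \<beta> (sq c m)" using transfer[OF tor] by blast
      thus "xseq c \<beta> u n = L u \<beta>" using L(2)[OF tor] m by (simp add: xseq_nat)
    qed
  next
    case False
    define p where "p = nat (- n)"
    have p: "n = - int p" and p1: "p \<ge> 1" using False by (simp_all add: p_def)
    obtain L where L: "L \<in> laurent" "\<And>u \<beta>. \<forall>i. u$i \<noteq> 0 \<Longrightarrow> L u \<beta> = Ev u \<beta> (sq c (p+3))"
      using laurent_fun[where c=c and n="p+3"] by blast
    show ?thesis
    proof (rule bexI[OF _ laurent_rv[OF L(1)]], intro allI impI)
      fix u \<beta> assume h: "\<forall>k::int. min n 0 \<le> k \<and> k \<le> max n 3 \<longrightarrow> xseq c \<beta> u k \<noteq> 0"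
      have hj: "xs c \<beta> (rv u) j \<noteq> 0" if "j < p + 3" for j
      proof -
        have "min n 0 \<le> 3 - int j \<and> 3 - int j \<le> max n 3" using that p p1 by auto
        thus ?thesis unfolding xs_rv using h by blast
      qed
      have tor: "\<forall>i. rv u $ i \<noteq> 0"
      proof -
        have "xs c \<beta> (rv u) 0 \<noteq> 0" "xs c \<beta> (rv u) 1 \<noteq> 0" "xs c \<beta> (rv u) 2 \<noteq> 0" "xs c \<beta> (rv u) 3 \<noteq> 0"
          using hj p1 by auto
        thus ?thesis unfolding all4 xs_init by blast
      qed
      have "xs c \<beta> (rv u) (p+3) = Ev (rv u) \<beta> (sq c (p+3))" using transfer[OF tor] hj by blast
      thus "xseq c \<beta> u n = L (rv u) \<beta>" using L(2)[OF tor] p xseq_neg by simp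
    qed
  qed
qed

theorem proposition3p1:
  fixes c :: nat
  shows
    \<comment> \<open>(i) Laurent property\<close>
    "(\<forall>n::int. \<exists>L\<in>laurent. \<forall>u \<beta>.
        (\<forall>k::int. min n 0 \<le> k \<and> k \<le> max n 3 \<longrightarrow> xseq c \<beta> u k \<noteq> 0)
          \<longrightarrow> xseq c \<beta> u n = L u \<beta>)
   \<and> \<comment> \<open>(ii) singularity confinement\<close>
     (\<forall>(\<beta>::complex) (u::complex \<Rightarrow> complex^4) (p::complex^4).
        (u \<longlongrightarrow> p) (at 0) \<longrightarrow> (\<forall>i. p $ i \<noteq> 0)
        \<longrightarrow> (\<forall>\<^sub>F \<epsilon> in at 0. xseq c \<beta> (u \<epsilon>) 4 = \<epsilon>)
        \<longrightarrow> Bfun (\<lambda>\<epsilon>. xseq c \<beta> (u \<epsilon>) 8) (at 0))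
   \<and> \<comment> \<open>(iii) phi is Poisson for the log-canonical bracket\<close>
     (\<forall>\<beta> x i j. x $ 0 \<noteq> 0 \<longrightarrow>
        pbr c (\<lambda>y. phi c \<beta> y $ i) (\<lambda>y. phi c \<beta> y $ j) x = lc_bracket c (phi c \<beta> x) $ i $ j)
   \<and> \<comment> \<open>(iii) nondegeneracy for c \<noteq> 2\<close>
     (c \<noteq> 2 \<longrightarrow> (\<forall>x. (\<forall>i. x $ i \<noteq> 0) \<longrightarrow> det (lc_bracket c x) \<noteq> 0))"
  proof -
  have i: "\<forall>n::int. \<exists>L\<in>laurent. \<forall>u \<beta>.
        (\<forall>k::int. min n 0 \<le> k \<and> k \<le> max n 3 \<longrightarrow> xseq c \<beta> u k \<noteq> 0)
          \<longrightarrow> xseq c \<beta> u n = L u \<beta>" by (rule part_i)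
  have ii: "\<forall>(\<beta>::complex) (u::complex \<Rightarrow> complex^4) (p::complex^4).
        (u \<longlongrightarrow> p) (at 0) \<longrightarrow> (\<forall>i. p $ i \<noteq> 0)
        \<longrightarrow> (\<forall>\<^sub>F \<epsilon> in at 0. xseq c \<beta> (u \<epsilon>) 4 = \<epsilon>)
        \<longrightarrow> Bfun (\<lambda>\<epsilon>. xseq c \<beta> (u \<epsilon>) 8) (at 0)"
    using confinement by blast
  have iii: "\<forall>\<beta> x i j. x $ 0 \<noteq> 0 \<longrightarrow>
        pbr c (\<lambda>y. phi c \<beta> y $ i) (\<lambda>y. phi c \<beta> y $ j) x = lc_bracket c (phi c \<beta> x) $ i $ j"
    using poisson by blast
  have iv: "c \<noteq> 2 \<longrightarrow> (\<forall>x. (\<forall>i. x $ i \<noteq> 0) \<longrightarrow> det (lc_bracket c x) \<noteq> 0)"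
    using det_nz by blast
  show ?thesis using i ii iii iv by blast
qed

end
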